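(* Let $f\colon\mathbb R\times\mathbb R\times\mathbb Z^3\to\mathbb C$, $a\in\mathbb Z^3$, $T\ge1$, let $J\subseteq[0,T]$ be an interval, and let $A,N\ge1$ with $|a|\lesssim A\ll N$. Assume that for all $|t|,|t'|\le T$ and $n\in\mathbb Z^3$: $|f(t,t',n)|\le A\langle n\rangle^{-3}$, $|f(t,t',n)-f(t,t',-n)|\le A\langle n\rangle^{-4}$, and $|\partial_{t'}f(t,t',n)|\le A\langle n\rangle^{-4}$. Then $$\sup_{\lambda\in\mathbb R}\sup_{|t|\le T}\Big|\sum_{n\in\mathbb Z^3}\chi_N(n)\int_0^t1_J(t')\sin((t-t')\langle a+n\rangle)\cos((t-t')\langle n\rangle)e^{i\lambda t'}f(t,t',n)\,dt'\Big|\lesssim T^2A^3\log(2+N)N^{-1}.$$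
   Context: $\langle n\rangle=(1+|n|^2)^{1/2}$. $N$ is dyadic and $\chi_N\colon\mathbb Z^3\to[0,1]$ is the Littlewood–Paley symbol ($\chi_1=\rho_1$, $\chi_N=\rho_N-\rho_{N/2}$ for a fixed smooth radial-type truncation $\rho_N$ to $|n|\lesssim N$), supported on $|n|\sim N$. "$|a|\lesssim A\ll N$" means $|a|\le CA$ for an absolute constant $C$ and $N\ge C'A$ for a sufficiently large absolute constant $C'$. Implicit constants are absolute. *)

theory Defs
  imports "HOL-Analysis.Analysis"
begin

type_synonym z3 = "int \<times> int \<times> int"

definition z3norm :: "z3 \<Rightarrow> real" where
  "z3norm n = (case n of (x,y,z) \<Rightarrow> sqrt (real_of_int x ^ 2 + real_of_int y ^ 2 + real_of_int z ^ 2))"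

definition jbr :: "z3 \<Rightarrow> real" where
  "jbr n = sqrt (1 + (z3norm n) ^ 2)"

definition z3add :: "z3 \<Rightarrow> z3 \<Rightarrow> z3" where
  "z3add m n = (case m of (a,b,c) \<Rightarrow> case n of (x,y,z) \<Rightarrow> (a+x, b+y, c+z))"

definition z3neg :: "z3 \<Rightarrow> z3" where
  "z3neg n = (case n of (x,y,z) \<Rightarrow> (-x, -y, -z))"

definition trunc_profile :: "(real \<Rightarrow> real) \<Rightarrow> bool" where
  "trunc_profile \<rho> \<longleftrightarrow>
     (\<forall>k x. ((deriv ^^ k) \<rho>) differentiable (at x)) \<and>
     (\<forall>r. 0 \<le> \<rho> r \<and> \<rho> r \<le> 1) \<and>
     (\<forall>r. \<bar>r\<bar> \<le> 1 \<longrightarrow> \<rho> r = 1) \<and>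
     (\<forall>r. \<bar>r\<bar> \<ge> 2 \<longrightarrow> \<rho> r = 0) \<and>
     (\<forall>r s. 0 \<le> r \<longrightarrow> r \<le> s \<longrightarrow> \<rho> s \<le> \<rho> r)"

definition rhoN :: "(real \<Rightarrow> real) \<Rightarrow> real \<Rightarrow> z3 \<Rightarrow> real" where
  "rhoN \<rho> N n = \<rho> (z3norm n / N)"

definition chiLP :: "(real \<Rightarrow> real) \<Rightarrow> nat \<Rightarrow> z3 \<Rightarrow> real" where
  "chiLP \<rho> k n = (if k = 0 then rhoN \<rho> 1 n
                   else rhoN \<rho> (2 ^ k) n - rhoN \<rho> (2 ^ (k - 1)) n)"

end

theory Submission
  imports Defs
begin


lemma osc_shift:
  fixes g :: "real \<Rightarrow> complex"
  assumes cd: "c \<le> d" and cont: "continuous_on {c..d} g"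
    and bd: "\<And>x. x\<in>{c..d} \<Longrightarrow> norm (g x) \<le> M"
    and lip: "\<And>x y. x\<in>{c..d} \<Longrightarrow> y\<in>{c..d} \<Longrightarrow> norm (g x - g y) \<le> L * \<bar>x - y\<bar>"
    and L0: "0 \<le> L" and mu: "\<mu> \<noteq> 0"
  shows "norm (integral {c..d} (\<lambda>x. cis (\<mu>*x) * g x)) \<le> M * (pi/\<bar>\<mu>\<bar>) + (d - c) * L * (pi/\<bar>\<mu>\<bar>) / 2"
proof -
  define h where "h = pi/\<bar>\<mu>\<bar>"
  have h0: "h > 0" using mu by (simp add: h_def)
  have M0: "0 \<le> M" using bd[of c] cd by (auto intro: order_trans[OF norm_ge_zero])
  define F where "F = (\<lambda>x. cis (\<mu>*x) * g x)"
  have Fc: "continuous_on {c..d} F" unfolding F_def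
    by (intro continuous_intros cont)
  have Fb: "norm (F x) \<le> M" if "x \<in> {c..d}" for x
    using bd[OF that] by (simp add: F_def norm_mult)
  have sub: "\<And>u v. c \<le> u \<Longrightarrow> v \<le> d \<Longrightarrow> continuous_on {u..v} F"
    using Fc by (rule continuous_on_subset) auto
  have bnd: "norm (integral {u..v} F) \<le> M * (v - u)" if "c \<le> u" "u \<le> v" "v \<le> d" for u v
    using integral_bound[OF that(2) sub[OF that(1,3)], of M] Fb that by auto
  show ?thesis
  proof (cases "d - c \<le> h")
    case True
    have "norm (integral {c..d} F) \<le> M * (d - c)" using bnd[of c d] cd by auto
    also have "\<dots> \<le> M * h" using True M0 by (intro mult_left_mono) auto
    finally have "norm (integral {c..d} F) \<le> M * h" .
    moreover have "0 \<le> (d-c)*L*h/2" using cd L0 h0 by simp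
    ultimately show ?thesis by (simp add: F_def h_def[symmetric])
  next
    case False
    have cis_h: "cis (\<mu> * (x + h)) = - cis (\<mu> * x)" for x
    proof -
      have "\<mu> * h = pi \<or> \<mu> * h = - pi" using mu by (auto simp: h_def abs_if)
      then have "cis (\<mu> * h) = -1" by (auto simp: cis.ctr complex_eq_iff)
      then show ?thesis by (simp add: distrib_left cis_mult[symmetric])
    qed
    have Fint: "F integrable_on {c..d}" by (rule integrable_continuous_interval[OF Fc])
    define I1 where "I1 = integral {c..d-h} F"
    define I2 where "I2 = integral {d-h..d} F"
    define I3 where "I3 = integral {c..c+h} F"
    define I4 where "I4 = integral {c..d-h} (\<lambda>x. cis (\<mu>*x) * g (x+h))"
    have e1: "integral {c..d} F = I1 + I2"
      unfolding I1_def I2_def using Henstock_Kurzweil_Integration.integral_combine[of c "d-h" d F] Fint False h0 by auto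
    have e2: "integral {c..d} F = I3 + integral {c+h..d} F"
      unfolding I3_def using Henstock_Kurzweil_Integration.integral_combine[of c "c+h" d F] Fint False h0 by auto
    have "integral {c+h..d} F = integral {c..d-h} (F \<circ> (+) h)"
      using integral_shift_Icc_real[of c "d-h" F h] by (simp add: add.commute)
    also have "(F \<circ> (+) h) = (\<lambda>x. - (cis (\<mu>*x) * g (x+h)))"
    proof
      fix x show "(F \<circ> (+) h) x = - (cis (\<mu>*x) * g (x+h))"
        using cis_h[of x] by (simp add: F_def add.commute[of h x])
    qed
    also have "integral {c..d-h} (\<lambda>x. - (cis (\<mu>*x) * g (x+h))) = - I4" unfolding I4_def
      by (rule integral_neg)
    finally have e3: "integral {c..d} F = I3 - I4" using e2 by simp
    have gc: "continuous_on {c..d-h} (\<lambda>x. g (x+h))"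
      using h0 by (intro continuous_on_compose2[OF cont] continuous_intros) auto
    have gc2: "continuous_on {c..d-h} g" using h0 by (intro continuous_on_subset[OF cont]) auto
    have d14: "I1 - I4 = integral {c..d-h} (\<lambda>x. cis (\<mu>*x) * (g x - g (x+h)))"
      unfolding I1_def I4_def F_def
      by (subst integral_diff[symmetric]) (auto simp: algebra_simps
          intro!: integrable_continuous_interval continuous_intros gc gc2)
    have n14: "norm (I1 - I4) \<le> L * h * ((d - h) - c)"
      unfolding d14
    proof (rule integral_bound)
      show "c \<le> d - h" using False by auto
      show "continuous_on {c..d - h} (\<lambda>x. cis (\<mu> * x) * (g x - g (x + h)))"
        by (intro continuous_intros gc gc2)
      fix x assume x: "x \<in> {c..d-h}"
      have "norm (g x - g (x+h)) \<le> L * \<bar>x - (x+h)\<bar>" using x h0 by (intro lip) auto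
      then show "norm (cis (\<mu> * x) * (g x - g (x + h))) \<le> L * h"
        using h0 by (simp add: norm_mult)
    qed
    have n2: "norm I2 \<le> M * h" unfolding I2_def using bnd[of "d-h" d] False h0 by auto
    have n3: "norm I3 \<le> M * h" unfolding I3_def using bnd[of c "c+h"] False h0 by auto
    have "2 * integral {c..d} F = I2 + I3 + (I1 - I4)" using e1 e3 by simp
    then have "2 * norm (integral {c..d} F) = norm (I2 + I3 + (I1 - I4))"
      by (metis norm_mult norm_numeral)
    also have "\<dots> \<le> norm I2 + norm I3 + norm (I1 - I4)"
      by (meson add_mono norm_triangle_ineq order_refl order_trans)
    also have "\<dots> \<le> M*h + M*h + L*h*((d-h)-c)" using n2 n3 n14 by linarith
    finally have "norm (integral {c..d} F) \<le> M*h + (d-c)*L*h/2 - L*h*h/2"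
      by (simp add: algebra_simps add_divide_distrib diff_divide_distrib)
    also have "\<dots> \<le> M*h + (d-c)*L*h/2" using L0 h0 by simp
    finally show ?thesis by (simp add: F_def h_def)
  qed
qed



lemma osc_bound:
  fixes g :: "real \<Rightarrow> complex"
  assumes cd: "0 \<le> c" "c \<le> d" "d \<le> T" and T1: "1 \<le> T" and cont: "continuous_on {c..d} g"
    and bd: "\<And>x. x\<in>{c..d} \<Longrightarrow> norm (g x) \<le> M"
    and lip: "\<And>x y. x\<in>{c..d} \<Longrightarrow> y\<in>{c..d} \<Longrightarrow> norm (g x - g y) \<le> L * \<bar>x - y\<bar>"
    and L0: "0 \<le> L"
  shows "norm (integral {c..d} (\<lambda>x. cis (\<mu>*x) * g x)) \<le> 2*pi*T*(M+L)/(1+\<bar>\<mu>\<bar>)"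
proof -
  have M0: "0 \<le> M" using bd[of c] cd by (auto intro: order_trans[OF norm_ge_zero])
  have triv: "norm (integral {c..d} (\<lambda>x. cis (\<mu>*x) * g x)) \<le> M * (d - c)"
    using cd bd by (intro integral_bound) (auto simp: norm_mult intro!: continuous_intros cont)
  show ?thesis
  proof (cases "\<bar>\<mu>\<bar> < 1")
    case True
    have "M * (d - c) \<le> M * T" using cd M0 by (intro mult_left_mono) auto
    also have "\<dots> \<le> 2*pi*T*(M+L)/(1+\<bar>\<mu>\<bar>)"
    proof -
      have "M * T * (1+\<bar>\<mu>\<bar>) \<le> M*T*2" using True M0 T1 by (intro mult_left_mono) auto
      also have "\<dots> \<le> 2*pi*T*(M+L)"
      proof -
        have "0 \<le> M*T" using M0 T1 by simp
        then have "M*T*2 \<le> M*T*(2*pi)" using pi_ge_two by (intro mult_left_mono) auto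
        moreover have "0 \<le> L*T*pi" using L0 T1 pi_gt_zero by simp
        ultimately show ?thesis by (simp add: algebra_simps)
      qed
      finally show ?thesis by (simp add: pos_le_divide_eq add_pos_nonneg)
    qed
    finally show ?thesis using triv by linarith
  next
    case False
    then have mu: "\<mu> \<noteq> 0" by auto
    have "norm (integral {c..d} (\<lambda>x. cis (\<mu>*x) * g x)) \<le> M * (pi/\<bar>\<mu>\<bar>) + (d - c) * L * (pi/\<bar>\<mu>\<bar>) / 2"
      by (rule osc_shift[OF cd(2) cont bd lip L0 mu])
    also have "\<dots> = pi * (M + (d-c)*L/2) / \<bar>\<mu>\<bar>" using mu by (simp add: field_simps)
    also have "\<dots> \<le> 2*pi*T*(M+L)/(1+\<bar>\<mu>\<bar>)"
    proof -
      have a1: "1*M \<le> T*M" using M0 T1 by (intro mult_right_mono) auto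
      have a2: "(d-c)*L \<le> T*L" using cd L0 by (intro mult_right_mono) auto
      have a3: "0 \<le> T*L" using L0 T1 by simp
      have a: "M + (d-c)*L/2 \<le> T*(M+L)" using a1 a2 a3 by (simp add: algebra_simps add_divide_distrib diff_divide_distrib)
      have "pi * (M + (d-c)*L/2) * (1+\<bar>\<mu>\<bar>) \<le> pi * (T*(M+L)) * (2*\<bar>\<mu>\<bar>)"
        using False a M0 L0 cd by (intro mult_mono) auto
      then show ?thesis using False by (simp add: field_simps)
    qed
    finally show ?thesis .
  qed
qed

lemma lbint_conv:
  assumes J: "is_interval J" and t: "0 \<le> t"
  shows "\<exists>c d. 0 \<le> c \<and> c \<le> d \<and> d \<le> t \<and> (\<forall>\<psi>::real\<Rightarrow>complex. continuous_on {0..t} \<psi> \<longrightarrow>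
     (LBINT x=ereal 0..ereal t. complex_of_real (indicator J x) * \<psi> x) = integral {c..d} \<psi>)"
proof -
  define K where "K = J \<inter> {0..t}"
  have Jb: "J \<in> sets lborel" using real_interval_borel_measurable[OF J] by simp
  have step1: "(LBINT x=ereal 0..ereal t. complex_of_real (indicator J x) * \<psi> x) = integral K \<psi>"
    if c: "continuous_on {0..t} \<psi>" for \<psi> :: "real \<Rightarrow> complex"
  proof -
    have "set_integrable lborel {0..t} \<psi>" by (rule borel_integrable_atLeastAtMost'[OF c])
    then have "integrable lborel (\<lambda>x. indicator J x *\<^sub>R (indicator {0..t} x *\<^sub>R \<psi> x))"
      unfolding set_integrable_def by (rule integrable_mult_indicator[OF Jb])
    moreover have "(\<lambda>x. indicator {0..t} x *\<^sub>R (complex_of_real (indicator J x) * \<psi> x))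
       = (\<lambda>x. indicator J x *\<^sub>R (indicator {0..t} x *\<^sub>R \<psi> x))"
      by (auto simp: indicator_def fun_eq_iff)
    ultimately have si: "set_integrable lborel {0..t} (\<lambda>x. complex_of_real (indicator J x) * \<psi> x)"
      unfolding set_integrable_def by simp
    have "(LBINT x=ereal 0..ereal t. complex_of_real (indicator J x) * \<psi> x)
        = integral {0..t} (\<lambda>x. complex_of_real (indicator J x) * \<psi> x)"
      using interval_integral_eq_integral[OF t si] by simp
    also have "\<dots> = integral {0..t} (\<lambda>x. if x \<in> J then \<psi> x else 0)"
      by (rule integral_cong) (auto simp: indicator_def)
    also have "\<dots> = integral K \<psi>" unfolding K_def by (rule integral_restrict_Int)
    finally show ?thesis .
  qed
  show ?thesis
  proof (cases "K = {}")
    case True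
    then show ?thesis using step1 t by (intro exI[of _ 0]) auto
  next
    case False
    have Ki: "is_interval K" unfolding K_def by (intro is_interval_Int J is_interval_cc)
    have Kb: "bdd_below K" "bdd_above K" unfolding K_def by auto
    define c where "c = Inf K"
    define d where "d = Sup K"
    have Ksub: "K \<subseteq> {c..d}" unfolding c_def d_def using Kb by (auto intro: cInf_lower cSup_upper)
    have Kin: "{c<..<d} \<subseteq> K"
    proof
      fix x assume x: "x \<in> {c<..<d}"
      obtain u where u: "u \<in> K" "u < x" using x False Kb unfolding c_def by (meson cInf_lessD greaterThanLessThan_iff)
      obtain v where v: "v \<in> K" "x < v" using x False Kb unfolding d_def by (meson less_cSupE greaterThanLessThan_iff)
      show "x \<in> K" using Ki u v unfolding is_interval_1 by (meson less_imp_le)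
    qed
    obtain w where w: "w \<in> K" using False by auto
    have cd: "c \<le> d" using Ksub w by auto
    have c0: "0 \<le> c" unfolding c_def using False by (intro cInf_greatest) (auto simp: K_def)
    have dt: "d \<le> t" unfolding d_def using False by (intro cSup_least) (auto simp: K_def)
    have eqK: "integral K \<psi> = integral {c..d} \<psi>" for \<psi> :: "real \<Rightarrow> complex"
    proof (rule integral_spike_set)
      have "{x \<in> K - {c..d}. \<psi> x \<noteq> 0} = {}" using Ksub by auto
      then show "negligible {x \<in> K - {c..d}. \<psi> x \<noteq> 0}" by (metis negligible_empty)
      have "{x \<in> {c..d} - K. \<psi> x \<noteq> 0} \<subseteq> {c, d}"
      proof
        fix x assume x: "x \<in> {x \<in> {c..d} - K. \<psi> x \<noteq> 0}"
        then have "x \<notin> {c<..<d}" using Kin by auto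
        then show "x \<in> {c, d}" using x by auto
      qed
      then show "negligible {x \<in> {c..d} - K. \<psi> x \<noteq> 0}"
        by (rule negligible_subset[rotated]) auto
    qed
    show ?thesis
      apply (rule exI[of _ c], rule exI[of _ d])
      using c0 cd dt by (simp add: step1 eqK)
  qed
qed



lemma harm_le_ln: "n \<ge> 1 \<Longrightarrow> (harm n :: real) \<le> 1 + ln (real n)"
proof (induction n rule: nat_induct_at_least)
  case base
  then show ?case by (simp add: harm_def)
next
  case (Suc n)
  have "1 / real (Suc n) \<le> ln (real (Suc n)) - ln (real n)"
  proof -
    have "ln (1 + (- 1 / real (Suc n))) \<le> - 1 / real (Suc n)"
      using Suc.hyps by (intro ln_add_one_self_le_self2) (auto simp: field_simps)
    moreover have "1 + (- 1 / real (Suc n)) = real n / real (Suc n)" by (simp add: field_simps)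
    moreover have "ln (real n / real (Suc n)) = ln (real n) - ln (real (Suc n))"
      using Suc.hyps by (simp add: ln_div)
    ultimately show ?thesis by simp
  qed
  then show ?case using Suc.IH by (simp add: harm_Suc inverse_eq_divide)
qed

lemma sum_inv_nat: "(\<Sum>i\<in>{0..K}. 1 / (1 + real i)) = (harm (Suc K) :: real)"
  unfolding harm_altdef by (rule sum.cong) (auto simp: inverse_eq_divide atLeast0AtMost lessThan_Suc_atMost)

lemma sum_abs_dist:
  fixes p q m0 :: int
  assumes "p \<le> m0" "m0 \<le> q"
  shows "(\<Sum>m\<in>{p..q}. 1 / (1 + real_of_int \<bar>m - m0\<bar>)) \<le> 2 * harm (nat (q - p) + 1)"
proof -
  have split: "{p..q} = {p..m0-1} \<union> {m0..q}" using assms by auto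
  have "(\<Sum>m\<in>{p..q}. 1 / (1 + real_of_int \<bar>m - m0\<bar>)) =
      (\<Sum>m\<in>{p..m0-1}. 1 / (1 + real_of_int \<bar>m - m0\<bar>)) + (\<Sum>m\<in>{m0..q}. 1 / (1 + real_of_int \<bar>m - m0\<bar>))"
    unfolding split by (rule sum.union_disjoint) auto
  also have "(\<Sum>m\<in>{m0..q}. 1 / (1 + real_of_int \<bar>m - m0\<bar>)) = (\<Sum>i\<in>{0..nat (q-m0)}. 1 / (1 + real i))"
  proof -
    have "{m0..q} = (\<lambda>i. m0 + int i) ` {0..nat (q-m0)}"
    proof (intro equalityI subsetI)
      fix x assume x: "x \<in> {m0..q}"
      then have "x = m0 + int (nat (x - m0))" "nat (x - m0) \<in> {0..nat (q-m0)}" by auto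
      then show "x \<in> (\<lambda>i. m0 + int i) ` {0..nat (q-m0)}" by (metis image_eqI)
    qed (use assms in \<open>auto simp: le_nat_iff\<close>)
    moreover have "inj_on (\<lambda>i. m0 + int i) {0..nat (q-m0)}" by (auto simp: inj_on_def)
    ultimately show ?thesis by (simp add: sum.reindex)
  qed
  also have "\<dots> = harm (Suc (nat (q-m0)))" by (rule sum_inv_nat)
  also have "\<dots> \<le> harm (nat (q - p) + 1)" using assms by (intro harm_mono) auto
  also have "(\<Sum>m\<in>{p..m0-1}. 1 / (1 + real_of_int \<bar>m - m0\<bar>)) \<le> (\<Sum>i\<in>{0..nat (m0-1-p)}. 1 / (1 + real i))"
  proof (cases "p \<le> m0 - 1")
    case True
    have "{p..m0-1} = (\<lambda>i. m0 - 1 - int i) ` {0..nat (m0-1-p)}"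
    proof (intro equalityI subsetI)
      fix x assume x: "x \<in> {p..m0-1}"
      then have "x = m0 - 1 - int (nat (m0 - 1 - x))" "nat (m0 - 1 - x) \<in> {0..nat (m0-1-p)}" by auto
      then show "x \<in> (\<lambda>i. m0 - 1 - int i) ` {0..nat (m0-1-p)}" by (metis image_eqI)
    qed (use True in \<open>auto simp: le_nat_iff\<close>)
    moreover have "inj_on (\<lambda>i. m0 - 1 - int i) {0..nat (m0-1-p)}" by (auto simp: inj_on_def)
    ultimately have "(\<Sum>m\<in>{p..m0-1}. 1 / (1 + real_of_int \<bar>m - m0\<bar>)) = (\<Sum>i\<in>{0..nat (m0-1-p)}. 1 / (2 + real i))"
      by (simp add: sum.reindex algebra_simps)
    also have "\<dots> \<le> (\<Sum>i\<in>{0..nat (m0-1-p)}. 1 / (1 + real i))"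
      by (intro sum_mono) (auto simp: field_simps)
    finally show ?thesis .
  next
    case False
    then have "{p..m0-1} = {}" by auto
    then show ?thesis by (simp add: sum_nonneg)
  qed
  also have "(\<Sum>i\<in>{0..nat (m0-1-p)}. 1 / (1 + real i)) = harm (Suc (nat (m0-1-p)))" by (rule sum_inv_nat)
  also have "\<dots> \<le> harm (nat (q - p) + 1)" using assms by (intro harm_mono) auto
  finally show ?thesis by simp
qed

lemma sep_sum:
  fixes Z :: "int set" and y :: "int \<Rightarrow> real"
  assumes Z: "Z \<subseteq> {p..q}" and pq: "p \<le> q"
    and sep: "\<And>m m'. m \<in> Z \<Longrightarrow> m' \<in> Z \<Longrightarrow> \<bar>real_of_int (m - m')\<bar> / 2 \<le> \<bar>y m - y m'\<bar>"
  shows "(\<Sum>m\<in>Z. 1 / (1 + \<bar>lam - y m\<bar>)) \<le> 8 * (1 + ln (real_of_int (q - p) + 1))"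
proof (cases "Z = {}")
  case True
  have "0 \<le> ln (real_of_int (q - p) + 1)" using pq by simp
  then show ?thesis using True by simp
next
  case False
  have fin: "finite Z" using Z finite_subset by blast
  define m0 where "m0 = arg_min_on (\<lambda>m. \<bar>lam - y m\<bar>) Z"
  have m0: "m0 \<in> Z" unfolding m0_def using arg_min_if_finite(1)[OF fin False] .
  have m0min: "\<bar>lam - y m0\<bar> \<le> \<bar>lam - y m\<bar>" if "m \<in> Z" for m
    unfolding m0_def using arg_min_least[OF fin False that] .
  have key: "1 / (1 + \<bar>lam - y m\<bar>) \<le> 4 * (1 / (1 + real_of_int \<bar>m - m0\<bar>))" if m: "m \<in> Z" for m
  proof -
    have "\<bar>real_of_int (m - m0)\<bar> / 2 \<le> \<bar>y m - y m0\<bar>" by (rule sep[OF m m0])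
    also have "\<dots> \<le> \<bar>lam - y m\<bar> + \<bar>lam - y m0\<bar>" by linarith
    also have "\<dots> \<le> 2 * \<bar>lam - y m\<bar>" using add_left_mono[OF m0min[OF m], of "\<bar>lam - y m\<bar>"] by simp
    finally have "real_of_int \<bar>m - m0\<bar> \<le> 4 * \<bar>lam - y m\<bar>" by simp
    then show ?thesis by (simp add: field_simps)
  qed
  have "(\<Sum>m\<in>Z. 1 / (1 + \<bar>lam - y m\<bar>)) \<le> (\<Sum>m\<in>Z. 4 * (1 / (1 + real_of_int \<bar>m - m0\<bar>)))"
    by (intro sum_mono key)
  also have "\<dots> \<le> (\<Sum>m\<in>{p..q}. 4 * (1 / (1 + real_of_int \<bar>m - m0\<bar>)))"
    by (intro sum_mono2 Z) auto
  also have "\<dots> = 4 * (\<Sum>m\<in>{p..q}. 1 / (1 + real_of_int \<bar>m - m0\<bar>))" by (simp add: sum_distrib_left)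
  also have "\<dots> \<le> 4 * (2 * harm (nat (q - p) + 1))"
    using m0 Z by (intro mult_left_mono sum_abs_dist) auto
  also have "harm (nat (q - p) + 1) \<le> 1 + ln (real (nat (q - p) + 1))" by (rule harm_le_ln) simp
  also have "real (nat (q - p) + 1) = real_of_int (q - p) + 1" using pq by simp
  finally show ?thesis by simp
qed



lemma z3norm_eq: "z3norm (x,y,z) = sqrt (real_of_int x ^ 2 + real_of_int y ^ 2 + real_of_int z ^ 2)"
  by (simp add: z3norm_def)

lemma jbr_eq: "jbr (x,y,z) = sqrt (1 + real_of_int x ^ 2 + real_of_int y ^ 2 + real_of_int z ^ 2)"
  by (simp add: jbr_def z3norm_def add.assoc)

lemma z3add_eq: "z3add (p,q,r) (x,y,z) = (p+x, q+y, r+z)"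
  by (simp add: z3add_def)

lemma z3neg_eq: "z3neg (x,y,z) = (-x, -y, -z)"
  by (simp add: z3neg_def)

lemma z3norm_nonneg: "0 \<le> z3norm n"
  by (cases n) (auto simp: z3norm_def)

lemma z3norm_neg[simp]: "z3norm (z3neg n) = z3norm n"
  by (cases n) (auto simp: z3norm_def z3neg_def)

lemma jbr_neg[simp]: "jbr (z3neg n) = jbr n"
  by (simp add: jbr_def)

lemma z3neg_neg[simp]: "z3neg (z3neg n) = n"
  by (cases n) (auto simp: z3neg_def)

lemma jbr_ge_norm: "z3norm n \<le> jbr n"
  unfolding jbr_def by (rule real_le_rsqrt) simp

lemma jbr_ge1: "1 \<le> jbr n"
  unfolding jbr_def by (rule real_le_rsqrt) simp

lemma coord_le_norm:
  fixes x y z :: int shows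
  "\<bar>real_of_int x\<bar> \<le> z3norm (x,y,z)" "\<bar>real_of_int y\<bar> \<le> z3norm (x,y,z)" "\<bar>real_of_int z\<bar> \<le> z3norm (x,y,z)"
  unfolding z3norm_eq by (rule real_le_rsqrt; simp)+

definition box :: "int \<Rightarrow> z3 set" where
  "box M = {-M..M} \<times> {-M..M} \<times> {-M..M}"

lemma finite_box[simp]: "finite (box M)" by (simp add: box_def)

lemma card_box: "0 \<le> M \<Longrightarrow> card (box M) = nat (2*M+1) ^ 3"
  by (simp add: box_def card_cartesian_product power3_eq_cube)

lemma notin_box: "n \<notin> box M \<Longrightarrow> real_of_int M < z3norm n"
proof -
  assume "n \<notin> box M"
  obtain x y z where n: "n = (x,y,z)" by (cases n) auto
  have "M < \<bar>x\<bar> \<or> M < \<bar>y\<bar> \<or> M < \<bar>z\<bar>" using \<open>n \<notin> box M\<close> unfolding n box_def by auto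
  then have "real_of_int M < \<bar>real_of_int x\<bar> \<or> real_of_int M < \<bar>real_of_int y\<bar> \<or> real_of_int M < \<bar>real_of_int z\<bar>"
    by (metis of_int_abs of_int_less_iff)
  then show ?thesis using coord_le_norm[where x=x and y=y and z=z] unfolding n by linarith
qed

lemma box_neg: "z3neg n \<in> box M \<longleftrightarrow> n \<in> box M"
  by (cases n) (auto simp: box_def z3neg_def)

lemma sqrt_gap:
  fixes B u v :: real
  assumes u1: "1 \<le> u" and uv: "u < v" and B0: "0 \<le> B" and Bu: "B \<le> 1 + 2*u^2"
  shows "(v-u)/2 \<le> sqrt (B+v^2) - sqrt (B+u^2)"
proof -
  define S1 where "S1 = sqrt (B+u^2)"
  define S2 where "S2 = sqrt (B+v^2)"
  have u2: "1 \<le> u^2" using u1 by (simp add: one_le_power)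
  have uv2: "u^2 \<le> v^2" using u1 uv by (intro power_mono) auto
  have e4: "(2*u)^2 = 4*u^2" "(2 * v)^2 = 4 * v^2" by (simp_all add: power_mult_distrib)
  have "B + u^2 \<le> (2*u)^2" using Bu u2 e4 by linarith
  then have S1: "S1 \<le> 2*u" unfolding S1_def using u1 by (intro real_le_lsqrt) auto
  have "B + v^2 \<le> (2 * v)^2" using Bu u2 uv2 e4 by linarith
  then have S2: "S2 \<le> 2 * v" unfolding S2_def using u1 uv by (intro real_le_lsqrt) auto
  have S1p: "0 < S1" unfolding S1_def using B0 u2 by simp
  have S2p: "0 \<le> S2" unfolding S2_def using B0 by simp
  have sq: "S2^2 - S1^2 = v^2 - u^2" unfolding S1_def S2_def using B0 by simp
  then have "(S2 - S1) * (S1 + S2) = (v - u) * (v + u)" by (simp add: power2_eq_square algebra_simps)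
  moreover have "S1 + S2 \<le> 2 * (v + u)" using S1 S2 by simp
  moreover have "0 < S1 + S2" using S1p S2p by simp
  moreover have "S1 \<le> S2" unfolding S1_def S2_def using uv2 by simp
  ultimately have "(v - u) * (v + u) \<le> (S2 - S1) * (2 * (v + u))"
    by (metis diff_ge_0_iff_ge mult_left_mono)
  then have "(v - u)/2 * (v+u) \<le> (S2 - S1) * (v+u)" by (simp add: algebra_simps diff_divide_distrib add_divide_distrib)
  then have "(v - u)/2 \<le> S2 - S1" using u1 uv by (simp add: mult_le_cancel_right)
  then show ?thesis by (simp add: S1_def S2_def)
qed



lemma lagrange4:
  fixes a b c d e f g h :: real
  shows "(a^2+b^2+c^2+d^2) * (e^2+f^2+g^2+h^2) - (a * e+b * f+c * g+d * h)^2 =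
    (a * f-b * e)^2 + (a * g-c * e)^2 + (a * h-d * e)^2 + (b * g-c * f)^2 + (b * h-d * f)^2 + (c * h-d * g)^2"
  by algebra

lemma second_diff:
  fixes x y z p q r :: real
  defines "P \<equiv> sqrt (1+(p+x)^2+(q+y)^2+(r+z)^2)"
    and "Q \<equiv> sqrt (1+(p-x)^2+(q-y)^2+(r-z)^2)"
    and "R \<equiv> sqrt (1+x^2+y^2+z^2)"
  shows "0 \<le> P + Q - 2 * R" "P + Q - 2 * R \<le> (p^2+q^2+r^2)/R"
proof -
  define s where "s = p^2+q^2+r^2"
  have s0: "0 \<le> s" unfolding s_def by simp
  have a1: "0 \<le> 1+(p+x)^2+(q+y)^2+(r+z)^2" "0 \<le> 1+(p-x)^2+(q-y)^2+(r-z)^2" "0 \<le> 1+x^2+y^2+z^2"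
    by (simp_all add: add_nonneg_nonneg)
  have P2: "P^2 = 1+(p+x)^2+(q+y)^2+(r+z)^2" unfolding P_def using a1 by simp
  have Q2: "Q^2 = 1+(p-x)^2+(q-y)^2+(r-z)^2" unfolding Q_def using a1 by simp
  have R2: "R^2 = 1+x^2+y^2+z^2" unfolding R_def using a1 by simp
  have P0: "0 \<le> P" "0 \<le> Q" unfolding P_def Q_def by simp_all
  have R1: "1 \<le> R" unfolding R_def by (rule real_le_rsqrt) (simp add: add_nonneg_nonneg)
  have PQ2: "P^2 + Q^2 = 2 * R^2 + 2 * s" unfolding P2 Q2 R2 s_def by (simp add: power2_eq_square algebra_simps)
  have "(R^2 - s)^2 \<le> P^2 * Q^2"
  proof -
    have "P^2 * Q^2 - (R^2 - s)^2 =
      (1^2+(x+p)^2+(y+q)^2+(z+r)^2) * (1^2+(x-p)^2+(y-q)^2+(z-r)^2) - (1*1+(x+p) * (x-p)+(y+q) * (y-q)+(z+r) * (z-r))^2"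
      unfolding P2 Q2 R2 s_def by (simp add: power2_eq_square algebra_simps)
    also have "\<dots> \<ge> 0" unfolding lagrange4 by simp
    finally show ?thesis by simp
  qed
  moreover have "(P * Q)^2 = P^2 * Q^2" by (rule power_mult_distrib)
  ultimately have "(R^2 - s)^2 \<le> (P * Q)^2" by simp
  moreover have "0 \<le> P * Q" using P0 by simp
  ultimately have PQ: "R^2 - s \<le> P * Q" by (rule power2_le_imp_le)
  have sum2: "(P+Q)^2 = P^2 + Q^2 + 2 * (P * Q)" by (simp add: power2_sum)
  have R4: "(2 * R)^2 = 4 * R^2" by (simp add: power_mult_distrib)
  have lo: "(2 * R)^2 \<le> (P+Q)^2" using PQ2 PQ sum2 R4 by linarith
  show "0 \<le> P + Q - 2 * R"
    using power2_le_imp_le[OF lo] P0 by simp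
  have "0 \<le> (P - Q)^2" by simp
  moreover have "(P - Q)^2 = P^2 + Q^2 - 2 * (P * Q)" by (simp add: power2_diff)
  ultimately have "(P+Q)^2 \<le> 4 * R^2 + 4 * s" using PQ2 sum2 by linarith
  also have "\<dots> \<le> (2 * R + s/R)^2"
  proof -
    have "(2 * R + s/R)^2 = 4 * R^2 + 4 * s + (s/R)^2" using R1 by (simp add: power2_eq_square field_simps)
    moreover have "0 \<le> (s/R)^2" by (rule zero_le_power2)
    ultimately show ?thesis by linarith
  qed
  finally have sq: "(P+Q)^2 \<le> (2 * R + s/R)^2" .
  have "0 \<le> 2 * R + s/R" using R1 s0 by simp
  with sq have "P + Q \<le> 2 * R + s/R" by (rule power2_le_imp_le)
  then show "P + Q - 2 * R \<le> (p^2+q^2+r^2)/R" unfolding s_def by simp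
qed

lemma sin_sum_le: fixes a b :: real shows "\<bar>sin a + sin b\<bar> \<le> \<bar>a + b\<bar>"
proof -
  have "\<bar>sin a + sin b\<bar> = 2 * \<bar>sin ((a+b)/2)\<bar> * \<bar>cos ((a-b)/2)\<bar>"
    by (simp add: sin_plus_sin abs_mult)
  also have "\<dots> \<le> 2 * \<bar>(a+b)/2\<bar> * 1"
    by (intro mult_mono abs_sin_x_le_abs_x) auto
  finally show ?thesis by simp
qed

lemma jbr_second_diff:
  "0 \<le> jbr (z3add a n) + jbr (z3add a (z3neg n)) - 2 * jbr n"
  "jbr (z3add a n) + jbr (z3add a (z3neg n)) - 2 * jbr n \<le> z3norm a ^ 2 / jbr n"
proof -
  obtain x y z where n: "n = (x,y,z)" by (cases n) auto
  obtain p q r where a: "a = (p,q,r)" by (cases a) auto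
  have na: "z3norm (p,q,r) ^ 2 = real_of_int p^2 + real_of_int q^2 + real_of_int r^2"
    unfolding z3norm_eq by (simp add: add_nonneg_nonneg)
  note sd = second_diff[of "real_of_int p" "real_of_int x" "real_of_int q" "real_of_int y" "real_of_int r" "real_of_int z"]
  show "0 \<le> jbr (z3add a n) + jbr (z3add a (z3neg n)) - 2 * jbr n"
    "jbr (z3add a n) + jbr (z3add a (z3neg n)) - 2 * jbr n \<le> z3norm a ^ 2 / jbr n"
    using sd unfolding n a z3add_eq z3neg_eq jbr_eq by (simp_all add: add.assoc na)
qed



definition om :: "z3 \<Rightarrow> z3 \<Rightarrow> real" where
  "om a n = jbr (z3add a n) + jbr n"

definition GG :: "real \<Rightarrow> z3 \<Rightarrow> z3 \<Rightarrow> real" where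
  "GG lam a n = 1 / (1 + \<bar>lam - om a n\<bar>)"

lemma GG_nonneg: "0 \<le> GG lam a n" by (simp add: GG_def)

definition R3 :: "int \<Rightarrow> real \<Rightarrow> z3 set" where
  "R3 M N = {n \<in> box M. N/2 < z3norm n \<and> 0 \<le> snd (snd n) \<and>
      (fst n)^2 + (fst (snd n))^2 \<le> 2 * (snd (snd n))^2}"

definition Zc :: "int \<Rightarrow> real \<Rightarrow> int \<Rightarrow> int \<Rightarrow> int set" where
  "Zc M N x y = {z \<in> {0..M}. N/2 < z3norm (x,y,z) \<and> x^2 + y^2 \<le> 2 * z^2}"

lemma R3_Sigma: "R3 M N = Sigma {-M..M} (\<lambda>x. Sigma {-M..M} (\<lambda>y. Zc M N x y))"
  by (auto simp: R3_def Zc_def box_def)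

lemma Zc_props:
  assumes z: "z \<in> Zc M N x y" and N8: "8 \<le> N" and a: "z3norm (p,q,r) \<le> N/4"
  shows "1 \<le> z" "0 \<le> z + r" "x^2 + y^2 \<le> 2 * z^2"
proof -
  have z0: "0 \<le> z" and zn: "N/2 < z3norm (x,y,z)" and xy: "x^2 + y^2 \<le> 2 * z^2"
    using z by (auto simp: Zc_def)
  show "x^2 + y^2 \<le> 2 * z^2" by (rule xy)
  have xyr: "real_of_int x^2 + real_of_int y^2 \<le> 2 * real_of_int z^2"
  proof -
    have "real_of_int (x^2 + y^2) \<le> real_of_int (2 * z^2)" using xy by (simp only: of_int_le_iff)
    then show ?thesis by simp
  qed
  have "(N/2)^2 < real_of_int x^2 + real_of_int y^2 + real_of_int z^2"
  proof (rule ccontr)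
    assume "\<not> ?thesis"
    then have "sqrt (real_of_int x^2 + real_of_int y^2 + real_of_int z^2) \<le> N/2"
      using N8 by (intro real_le_lsqrt) auto
    then show False using zn unfolding z3norm_eq by simp
  qed
  then have zbig: "N^2/12 < real_of_int z^2" using xyr by (simp add: power_divide)
  have "\<bar>real_of_int r\<bar> \<le> N/4" using coord_le_norm(3)[where x=p and y=q and z=r] a by linarith
  then have "real_of_int r^2 \<le> (N/4)^2"
    by (metis abs_ge_zero power2_abs power_mono)
  then have r2: "real_of_int r^2 \<le> N^2/16" by (simp add: power_divide)
  have "0 \<le> N^2" by simp
  then have "real_of_int r^2 < real_of_int z^2" using zbig r2 by linarith
  then have "\<bar>real_of_int r\<bar>^2 < \<bar>real_of_int z\<bar>^2" by simp
  then have "\<bar>real_of_int r\<bar> < \<bar>real_of_int z\<bar>" by (rule power_less_imp_less_base) simp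
  then show "0 \<le> z + r" using z0 by linarith
  have "8 * 8 \<le> N * N" using N8 by (intro mult_mono) auto
  then have "64 \<le> N^2" by (simp add: power2_eq_square)
  then have "1 < real_of_int z^2" using zbig by linarith
  then have "real_of_int 1 < real_of_int (z^2)" by simp
  then have "1 < z^2" by (simp only: of_int_less_iff)
  then show "1 \<le> z" using z0 by (cases "z = 0") auto
qed

lemma om_col: "om (p,q,r) (x,y,w) = sqrt (1 + real_of_int (p+x)^2 + real_of_int (q+y)^2 + real_of_int (r+w)^2)
   + sqrt ((1 + real_of_int x^2 + real_of_int y^2) + real_of_int w^2)"
  by (simp add: om_def jbr_eq z3add_eq del: of_int_add)

lemma sep_lt:
  assumes z: "z \<in> Zc M N x y" and z': "z' \<in> Zc M N x y" and zz: "z < z'"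
    and N8: "8 \<le> N" and a: "z3norm (p,q,r) \<le> N/4"
  shows "real_of_int (z' - z) / 2 \<le> om (p,q,r) (x,y,z') - om (p,q,r) (x,y,z)"
proof -
  note zp = Zc_props[OF z N8 a]
  have rz: "0 \<le> real_of_int (r + z)" using zp by simp
  have rz': "real_of_int (r + z) \<le> real_of_int (r + z')" using zz by simp
  have "real_of_int (r+z)^2 \<le> real_of_int (r+z')^2" using rz rz' by (intro power_mono) auto
  then have m1: "sqrt (1 + real_of_int (p+x)^2 + real_of_int (q+y)^2 + real_of_int (r+z)^2)
      \<le> sqrt (1 + real_of_int (p+x)^2 + real_of_int (q+y)^2 + real_of_int (r+z')^2)" by simp
  have xy: "real_of_int x^2 + real_of_int y^2 \<le> 2 * real_of_int z^2"
  proof -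
    have "real_of_int (x^2 + y^2) \<le> real_of_int (2 * z^2)" using zp(3) by (simp only: of_int_le_iff)
    then show ?thesis by simp
  qed
  have m2: "(real_of_int z' - real_of_int z)/2 \<le> sqrt ((1 + real_of_int x^2 + real_of_int y^2) + real_of_int z'^2)
      - sqrt ((1 + real_of_int x^2 + real_of_int y^2) + real_of_int z^2)"
    using zp(1) zz xy by (intro sqrt_gap) auto
  have "real_of_int (z' - z) = real_of_int z' - real_of_int z" by simp
  then show ?thesis unfolding om_col using m1 m2
    by (smt (verit))
qed

lemma sep_col:
  assumes z: "z \<in> Zc M N x y" and z': "z' \<in> Zc M N x y"
    and N8: "8 \<le> N" and a: "z3norm a \<le> N/4"
  shows "\<bar>real_of_int (z - z')\<bar> / 2 \<le> \<bar>om a (x,y,z) - om a (x,y,z')\<bar>"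
proof -
  obtain p q r where ap: "a = (p,q,r)" by (cases a) auto
  consider "z < z'" | "z = z'" | "z' < z" by linarith
  then show ?thesis
  proof cases
    case 1 then show ?thesis using sep_lt[OF z z' 1 N8 a[unfolded ap]] unfolding ap by simp
  next
    case 2 then show ?thesis by simp
  next
    case 3 then show ?thesis using sep_lt[OF z' z 3 N8 a[unfolded ap]] unfolding ap by simp
  qed
qed

lemma col_sum:
  assumes M0: "0 \<le> M" and N8: "8 \<le> N" and a: "z3norm a \<le> N/4"
  shows "(\<Sum>z\<in>Zc M N x y. GG lam a (x,y,z)) \<le> 8 * (1 + ln (real_of_int M + 1))"
proof -
  have "(\<Sum>z\<in>Zc M N x y. 1 / (1 + \<bar>lam - om a (x,y,z)\<bar>)) \<le> 8 * (1 + ln (real_of_int (M - 0) + 1))"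
    by (rule sep_sum[where p=0 and q=M]) (use M0 sep_col[OF _ _ N8 a] in \<open>auto simp: Zc_def\<close>)
  then show ?thesis by (simp add: GG_def)
qed

lemma R3_sum:
  assumes M0: "0 \<le> M" and N8: "8 \<le> N" and a: "z3norm a \<le> N/4"
  shows "(\<Sum>n\<in>R3 M N. GG lam a n) \<le> real_of_int (2*M+1)^2 * (8 * (1 + ln (real_of_int M + 1)))"
proof -
  have finZ: "finite (Zc M N x y)" for x y by (rule finite_subset[of _ "{0..M}"]) (auto simp: Zc_def)
  have "(\<Sum>n\<in>R3 M N. GG lam a n) = (\<Sum>x\<in>{-M..M}. \<Sum>w\<in>Sigma {-M..M} (\<lambda>y. Zc M N x y). GG lam a (x,w))"
    unfolding R3_Sigma by (subst sum.Sigma) (auto simp: finZ)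
  also have "\<dots> = (\<Sum>x\<in>{-M..M}. \<Sum>y\<in>{-M..M}. \<Sum>z\<in>Zc M N x y. GG lam a (x,y,z))"
    by (intro sum.cong refl, subst sum.Sigma) (auto simp: finZ)
  also have "\<dots> \<le> (\<Sum>x\<in>{-M..M}. \<Sum>y\<in>{-M..M}. 8 * (1 + ln (real_of_int M + 1)))"
    by (intro sum_mono col_sum M0 N8 a)
  also have "\<dots> = real_of_int (2*M+1)^2 * (8 * (1 + ln (real_of_int M + 1)))"
    using M0 by (simp add: power2_eq_square)
  finally show ?thesis .
qed



definition sw1 :: "z3 \<Rightarrow> z3" where "sw1 n = (case n of (x,y,z) \<Rightarrow> (z,y,x))"
definition sw2 :: "z3 \<Rightarrow> z3" where "sw2 n = (case n of (x,y,z) \<Rightarrow> (x,z,y))"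

lemma sw1_eq[simp]: "sw1 (x,y,z) = (z,y,x)" by (simp add: sw1_def)
lemma sw2_eq[simp]: "sw2 (x,y,z) = (x,z,y)" by (simp add: sw2_def)
lemma sw1_sw1[simp]: "sw1 (sw1 n) = n" by (cases n) auto
lemma sw2_sw2[simp]: "sw2 (sw2 n) = n" by (cases n) auto
lemma jbr_sw1[simp]: "jbr (sw1 n) = jbr n" by (cases n) (simp add: jbr_eq algebra_simps)
lemma jbr_sw2[simp]: "jbr (sw2 n) = jbr n" by (cases n) (simp add: jbr_eq algebra_simps)
lemma norm_sw1[simp]: "z3norm (sw1 n) = z3norm n" by (cases n) (simp add: z3norm_eq algebra_simps)
lemma norm_sw2[simp]: "z3norm (sw2 n) = z3norm n" by (cases n) (simp add: z3norm_eq algebra_simps)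
lemma add_sw1: "z3add a (sw1 m) = sw1 (z3add (sw1 a) m)"
  by (cases a; cases m) (simp add: z3add_eq)
lemma add_sw2: "z3add a (sw2 m) = sw2 (z3add (sw2 a) m)"
  by (cases a; cases m) (simp add: z3add_eq)
lemma add_neg: "z3add a (z3neg m) = z3neg (z3add (z3neg a) m)"
  by (cases a; cases m) (simp add: z3add_eq z3neg_eq)

lemma GG_sw1: "GG lam a (sw1 m) = GG lam (sw1 a) m" by (simp add: GG_def om_def add_sw1)
lemma GG_sw2: "GG lam a (sw2 m) = GG lam (sw2 a) m" by (simp add: GG_def om_def add_sw2)
lemma GG_neg: "GG lam a (z3neg m) = GG lam (z3neg a) m" by (simp add: GG_def om_def add_neg)

lemma inj_sw1: "inj sw1" by (metis injI sw1_sw1)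
lemma inj_sw2: "inj sw2" by (metis injI sw2_sw2)
lemma inj_neg: "inj z3neg" by (metis injI z3neg_neg)

definition Sp :: "int \<Rightarrow> real \<Rightarrow> z3 set" where
  "Sp M N = {n \<in> box M. N/2 < z3norm n}"

lemma sum_le_Un:
  fixes g :: "'a \<Rightarrow> real"
  assumes "finite B" "finite C" "\<And>x. 0 \<le> g x" "A \<subseteq> B \<union> C"
  shows "sum g A \<le> sum g B + sum g C"
proof -
  have "sum g A \<le> sum g (B \<union> C)" using assms by (intro sum_mono2) auto
  also have "\<dots> = sum g B + sum g C - sum g (B \<inter> C)" using assms by (simp add: sum_Un)
  also have "\<dots> \<le> sum g B + sum g C" using assms by (simp add: sum_nonneg)
  finally show ?thesis .
qed

lemma finite_R3[simp]: "finite (R3 M N)"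
  by (rule finite_subset[of _ "box M"]) (auto simp: R3_def)

lemma cover:
  "Sp M N \<subseteq> R3 M N \<union> (z3neg ` R3 M N \<union> (sw1 ` R3 M N \<union> (sw1 ` z3neg ` R3 M N \<union>
     (sw2 ` R3 M N \<union> sw2 ` z3neg ` R3 M N))))"
proof
  fix n assume n: "n \<in> Sp M N"
  obtain x y z where nx: "n = (x,y,z)" by (cases n) auto
  have bx: "(x,y,z) \<in> box M" "N/2 < z3norm (x,y,z)" using n unfolding nx Sp_def by auto
  have bperm: "(a,b,c) \<in> box M" if "a \<in> {-M..M}" "b \<in> {-M..M}" "c \<in> {-M..M}" for a b c
    using that by (simp add: box_def)
  have cx: "x \<in> {-M..M}" "y \<in> {-M..M}" "z \<in> {-M..M}" using bx(1) by (auto simp: box_def)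
  have cnx: "-x \<in> {-M..M}" "-y \<in> {-M..M}" "-z \<in> {-M..M}" using cx by auto
  have nrm: "z3norm (a,b,c) = z3norm (x,y,z)" if "a^2+b^2+c^2 = x^2+y^2+z^2" for a b c
  proof -
    have "real_of_int (a^2+b^2+c^2) = real_of_int (x^2+y^2+z^2)" using that by simp
    then show ?thesis unfolding z3norm_eq by simp
  qed
  have sq: "(a::int)^2 \<le> b^2 \<Longrightarrow> 0 \<le> b^2" for a b by simp
  consider "x^2 \<le> z^2 \<and> y^2 \<le> z^2" | "z^2 \<le> x^2 \<and> y^2 \<le> x^2" | "x^2 \<le> y^2 \<and> z^2 \<le> y^2" by linarith
  then show "n \<in> R3 M N \<union> (z3neg ` R3 M N \<union> (sw1 ` R3 M N \<union> (sw1 ` z3neg ` R3 M N \<union>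
     (sw2 ` R3 M N \<union> sw2 ` z3neg ` R3 M N))))"
  proof cases
    case 1
    show ?thesis
    proof (cases "0 \<le> z")
      case True
      have "(x,y,z) \<in> R3 M N" using 1 True bx unfolding R3_def by auto
      then show ?thesis unfolding nx by blast
    next
      case False
      have "(-x,-y,-z) \<in> R3 M N" using 1 False bx cx cnx bperm nrm[of "-x" "-y" "-z"] unfolding R3_def by auto
      then have "z3neg (-x,-y,-z) \<in> z3neg ` R3 M N" by blast
      then show ?thesis unfolding nx by (simp add: z3neg_eq)
    qed
  next
    case 2
    show ?thesis
    proof (cases "0 \<le> x")
      case True
      have "(z,y,x) \<in> R3 M N" using 2 True bx cx bperm nrm[of z y x] unfolding R3_def by (auto simp: algebra_simps)
      then have "sw1 (z,y,x) \<in> sw1 ` R3 M N" by blast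
      then show ?thesis unfolding nx by simp
    next
      case False
      have "(-z,-y,-x) \<in> R3 M N" using 2 False bx cnx bperm nrm[of "-z" "-y" "-x"] unfolding R3_def by (auto simp: algebra_simps)
      then have "sw1 (z3neg (-z,-y,-x)) \<in> sw1 ` z3neg ` R3 M N" by blast
      then show ?thesis unfolding nx by (simp add: z3neg_eq)
    qed
  next
    case 3
    show ?thesis
    proof (cases "0 \<le> y")
      case True
      have "(x,z,y) \<in> R3 M N" using 3 True bx cx bperm nrm[of x z y] unfolding R3_def by (auto simp: algebra_simps)
      then have "sw2 (x,z,y) \<in> sw2 ` R3 M N" by blast
      then show ?thesis unfolding nx by simp
    next
      case False
      have "(-x,-z,-y) \<in> R3 M N" using 3 False bx cnx bperm nrm[of "-x" "-z" "-y"] unfolding R3_def by (auto simp: algebra_simps)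
      then have "sw2 (z3neg (-x,-z,-y)) \<in> sw2 ` z3neg ` R3 M N" by blast
      then show ?thesis unfolding nx by (simp add: z3neg_eq)
    qed
  qed
qed

lemma neg_norm[simp]: "z3norm (z3neg a) = z3norm a" by simp

lemma Sp_sum:
  assumes M0: "0 \<le> M" and N8: "8 \<le> N" and a: "z3norm a \<le> N/4"
  shows "(\<Sum>n\<in>Sp M N. GG lam a n) \<le> 6 * (real_of_int (2*M+1)^2 * (8 * (1 + ln (real_of_int M + 1))))"
proof -
  define B where "B = real_of_int (2*M+1)^2 * (8 * (1 + ln (real_of_int M + 1)))"
  have RB: "z3norm b \<le> N/4 \<Longrightarrow> (\<Sum>n\<in>R3 M N. GG lam b n) \<le> B" for b
    unfolding B_def by (rule R3_sum[OF M0 N8])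
  have i1: "(\<Sum>n\<in>z3neg ` R3 M N. GG lam a n) \<le> B"
  proof -
    have "(\<Sum>n\<in>z3neg ` R3 M N. GG lam a n) = (\<Sum>n\<in>R3 M N. GG lam (z3neg a) n)"
      by (subst sum.reindex) (auto intro: inj_on_subset[OF inj_neg] simp: GG_neg)
    also have "\<dots> \<le> B" using a by (intro RB) simp
    finally show ?thesis .
  qed
  have i2: "(\<Sum>n\<in>sw1 ` R3 M N. GG lam a n) \<le> B"
  proof -
    have "(\<Sum>n\<in>sw1 ` R3 M N. GG lam a n) = (\<Sum>n\<in>R3 M N. GG lam (sw1 a) n)"
      by (subst sum.reindex) (auto intro: inj_on_subset[OF inj_sw1] simp: GG_sw1)
    also have "\<dots> \<le> B" using a by (intro RB) simp
    finally show ?thesis .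
  qed
  have i3: "(\<Sum>n\<in>sw2 ` R3 M N. GG lam a n) \<le> B"
  proof -
    have "(\<Sum>n\<in>sw2 ` R3 M N. GG lam a n) = (\<Sum>n\<in>R3 M N. GG lam (sw2 a) n)"
      by (subst sum.reindex) (auto intro: inj_on_subset[OF inj_sw2] simp: GG_sw2)
    also have "\<dots> \<le> B" using a by (intro RB) simp
    finally show ?thesis .
  qed
  have i4: "(\<Sum>n\<in>sw1 ` z3neg ` R3 M N. GG lam a n) \<le> B"
  proof -
    have "(\<Sum>n\<in>sw1 ` z3neg ` R3 M N. GG lam a n) = (\<Sum>n\<in>z3neg ` R3 M N. GG lam (sw1 a) n)"
      by (subst sum.reindex) (auto intro: inj_on_subset[OF inj_sw1] simp: GG_sw1)
    also have "\<dots> = (\<Sum>n\<in>R3 M N. GG lam (z3neg (sw1 a)) n)"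
      by (subst sum.reindex) (auto intro: inj_on_subset[OF inj_neg] simp: GG_neg)
    also have "\<dots> \<le> B" using a by (intro RB) simp
    finally show ?thesis .
  qed
  have i5: "(\<Sum>n\<in>sw2 ` z3neg ` R3 M N. GG lam a n) \<le> B"
  proof -
    have "(\<Sum>n\<in>sw2 ` z3neg ` R3 M N. GG lam a n) = (\<Sum>n\<in>z3neg ` R3 M N. GG lam (sw2 a) n)"
      by (subst sum.reindex) (auto intro: inj_on_subset[OF inj_sw2] simp: GG_sw2)
    also have "\<dots> = (\<Sum>n\<in>R3 M N. GG lam (z3neg (sw2 a)) n)"
      by (subst sum.reindex) (auto intro: inj_on_subset[OF inj_neg] simp: GG_neg)
    also have "\<dots> \<le> B" using a by (intro RB) simp
    finally show ?thesis .
  qed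
  have i0: "(\<Sum>n\<in>R3 M N. GG lam a n) \<le> B" by (rule RB[OF a])
  let ?g = "GG lam a"
  have fin: "finite (R3 M N)" "finite (z3neg ` R3 M N)" "finite (sw1 ` R3 M N)"
     "finite (sw1 ` z3neg ` R3 M N)" "finite (sw2 ` R3 M N)" "finite (sw2 ` z3neg ` R3 M N)" by auto
  have "sum ?g (Sp M N) \<le> sum ?g (R3 M N) + sum ?g (z3neg ` R3 M N \<union> (sw1 ` R3 M N \<union> (sw1 ` z3neg ` R3 M N \<union>
     (sw2 ` R3 M N \<union> sw2 ` z3neg ` R3 M N))))"
    by (rule sum_le_Un[OF _ _ GG_nonneg cover]) auto
  also have "sum ?g (z3neg ` R3 M N \<union> (sw1 ` R3 M N \<union> (sw1 ` z3neg ` R3 M N \<union>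
     (sw2 ` R3 M N \<union> sw2 ` z3neg ` R3 M N)))) \<le> sum ?g (z3neg ` R3 M N) + sum ?g (sw1 ` R3 M N \<union> (sw1 ` z3neg ` R3 M N \<union>
     (sw2 ` R3 M N \<union> sw2 ` z3neg ` R3 M N)))"
    by (rule sum_le_Un[OF _ _ GG_nonneg]) auto
  also have "sum ?g (sw1 ` R3 M N \<union> (sw1 ` z3neg ` R3 M N \<union> (sw2 ` R3 M N \<union> sw2 ` z3neg ` R3 M N)))
     \<le> sum ?g (sw1 ` R3 M N) + sum ?g (sw1 ` z3neg ` R3 M N \<union> (sw2 ` R3 M N \<union> sw2 ` z3neg ` R3 M N))"
    by (rule sum_le_Un[OF _ _ GG_nonneg]) auto
  also have "sum ?g (sw1 ` z3neg ` R3 M N \<union> (sw2 ` R3 M N \<union> sw2 ` z3neg ` R3 M N))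
     \<le> sum ?g (sw1 ` z3neg ` R3 M N) + sum ?g (sw2 ` R3 M N \<union> sw2 ` z3neg ` R3 M N)"
    by (rule sum_le_Un[OF _ _ GG_nonneg]) auto
  also have "sum ?g (sw2 ` R3 M N \<union> sw2 ` z3neg ` R3 M N) \<le> sum ?g (sw2 ` R3 M N) + sum ?g (sw2 ` z3neg ` R3 M N)"
    by (rule sum_le_Un[OF _ _ GG_nonneg]) auto
  finally have "sum ?g (Sp M N) \<le> sum ?g (R3 M N) + (sum ?g (z3neg ` R3 M N) + (sum ?g (sw1 ` R3 M N) +
     (sum ?g (sw1 ` z3neg ` R3 M N) + (sum ?g (sw2 ` R3 M N) + sum ?g (sw2 ` z3neg ` R3 M N)))))"
    by simp
  then show ?thesis using i0 i1 i2 i3 i4 i5 unfolding B_def[symmetric] by linarith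
qed



lemma lip_deriv:
  fixes g :: "real \<Rightarrow> complex"
  assumes H: "\<And>s. s \<in> {a..b} \<Longrightarrow> \<exists>D. (g has_vector_derivative D) (at s within {a..b}) \<and> norm D \<le> B"
  shows "continuous_on {a..b} g" "\<And>x y. x\<in>{a..b} \<Longrightarrow> y\<in>{a..b} \<Longrightarrow> norm (g x - g y) \<le> B * \<bar>x - y\<bar>"
proof -
  obtain D where D: "\<And>s. s \<in> {a..b} \<Longrightarrow> (g has_vector_derivative D s) (at s within {a..b}) \<and> norm (D s) \<le> B"
    using H by metis
  show "continuous_on {a..b} g"
    unfolding continuous_on_eq_continuous_within
    using D has_vector_derivative_continuous by blast
  fix x y assume x: "x \<in> {a..b}" and y: "y \<in> {a..b}"
  have "norm (g x - g y) \<le> B * norm (x - y)"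
  proof (rule differentiable_bound[where f'="\<lambda>s h. h *\<^sub>R D s"])
    show "convex {a..b}" by simp
    show "(g has_derivative (\<lambda>h. h *\<^sub>R D s)) (at s within {a..b})" if "s \<in> {a..b}" for s
      using D[OF that] by (simp add: has_vector_derivative_def)
    show "onorm (\<lambda>h. h *\<^sub>R D s) \<le> B" if "s \<in> {a..b}" for s
    proof (rule onorm_le)
      fix h :: real
      show "norm (h *\<^sub>R D s) \<le> B * norm h"
        using D[OF that] by (simp add: mult.commute[of B] mult_left_mono)
    qed
  qed (use x y in auto)
  then show "norm (g x - g y) \<le> B * \<bar>x - y\<bar>" by simp
qed

lemma sin_cis_split:
  fixes t x w lam :: real
  shows "complex_of_real (sin ((t-x)*w)) * cis (lam*x) =
     (cis (t*w) * cis ((lam-w)*x) - cis (-(t*w)) * cis ((lam+w)*x)) / (2*\<i>)"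
proof -
  define th where "th = (t-x)*w"
  have s: "cis th - cis (-th) = 2 * \<i> * complex_of_real (sin th)"
    by (simp add: cis.ctr complex_eq_iff)
  have e1: "cis th * cis (lam*x) = cis (t*w) * cis ((lam-w)*x)"
    unfolding cis_mult th_def by (simp add: algebra_simps)
  have e2: "cis (-th) * cis (lam*x) = cis (-(t*w)) * cis ((lam+w)*x)"
    unfolding cis_mult th_def by (simp add: algebra_simps)
  have "2 * \<i> * (complex_of_real (sin th) * cis (lam*x)) = cis (t*w) * cis ((lam-w)*x) - cis (-(t*w)) * cis ((lam+w)*x)"
    using s e1 e2 by (metis mult.assoc left_diff_distrib)
  then show ?thesis unfolding th_def[symmetric] by (simp add: field_simps)
qed

lemma P_bound:
  fixes g :: "real \<Rightarrow> complex"
  assumes cd: "0 \<le> c" "c \<le> d" "d \<le> T" and T1: "1 \<le> T" and cont: "continuous_on {c..d} g"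
    and bd: "\<And>x. x\<in>{c..d} \<Longrightarrow> norm (g x) \<le> M"
    and lip: "\<And>x y. x\<in>{c..d} \<Longrightarrow> y\<in>{c..d} \<Longrightarrow> norm (g x - g y) \<le> L * \<bar>x - y\<bar>"
    and L0: "0 \<le> L"
  shows "norm (integral {c..d} (\<lambda>x. complex_of_real (sin ((t-x)*w)) * cis (lam*x) * g x))
     \<le> pi*T*(M+L)*(1/(1+\<bar>lam - w\<bar>) + 1/(1+\<bar>lam + w\<bar>))"
proof -
  define F1 where "F1 = (\<lambda>x. cis ((lam-w)*x) * g x)"
  define F2 where "F2 = (\<lambda>x. cis ((lam+w)*x) * g x)"
  define I1 where "I1 = integral {c..d} F1"
  define I2 where "I2 = integral {c..d} F2"
  have h1: "(F1 has_integral I1) {c..d}" unfolding I1_def F1_def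
    by (intro integrable_integral integrable_continuous_interval continuous_intros cont)
  have h2: "(F2 has_integral I2) {c..d}" unfolding I2_def F2_def
    by (intro integrable_integral integrable_continuous_interval continuous_intros cont)
  have hi: "((\<lambda>x. (cis (t*w) * F1 x - cis (-(t*w)) * F2 x) / (2*\<i>)) has_integral
      (cis (t*w) * I1 - cis (-(t*w)) * I2) / (2*\<i>)) {c..d}"
    by (intro has_integral_divide has_integral_diff has_integral_mult_right h1 h2)
  have fe: "(\<lambda>x. (cis (t*w) * F1 x - cis (-(t*w)) * F2 x) / (2*\<i>)) =
     (\<lambda>x. complex_of_real (sin ((t-x)*w)) * cis (lam*x) * g x)"
  proof
    fix x
    have "complex_of_real (sin ((t-x)*w)) * cis (lam*x) * g x =
      ((cis (t*w) * cis ((lam-w)*x) - cis (-(t*w)) * cis ((lam+w)*x)) / (2*\<i>)) * g x"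
      by (simp only: sin_cis_split)
    then show "(cis (t*w) * F1 x - cis (-(t*w)) * F2 x) / (2*\<i>) = complex_of_real (sin ((t-x)*w)) * cis (lam*x) * g x"
      by (simp add: F1_def F2_def field_simps)
  qed
  have hi2: "((\<lambda>x. complex_of_real (sin ((t-x)*w)) * cis (lam*x) * g x) has_integral
      (cis (t*w) * I1 - cis (-(t*w)) * I2) / (2*\<i>)) {c..d}"
    using hi unfolding fe .
  have eq: "integral {c..d} (\<lambda>x. complex_of_real (sin ((t-x)*w)) * cis (lam*x) * g x) =
      (cis (t*w) * I1 - cis (-(t*w)) * I2) / (2*\<i>)"
    by (rule integral_unique[OF hi2])
  have n1: "norm I1 \<le> 2*pi*T*(M+L)/(1+\<bar>lam - w\<bar>)" unfolding I1_def F1_def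
    by (rule osc_bound[OF cd T1 cont bd lip L0])
  have n2: "norm I2 \<le> 2*pi*T*(M+L)/(1+\<bar>lam + w\<bar>)" unfolding I2_def F2_def
    by (rule osc_bound[OF cd T1 cont bd lip L0])
  have "norm ((cis (t*w) * I1 - cis (-(t*w)) * I2) / (2*\<i>)) = norm (cis (t*w) * I1 - cis (-(t*w)) * I2) / 2"
    by (simp add: norm_divide norm_mult)
  also have "\<dots> \<le> (norm I1 + norm I2) / 2"
    using norm_triangle_ineq4[of "cis (t*w) * I1" "cis (-(t*w)) * I2"] by (simp add: norm_mult)
  also have "\<dots> \<le> (2*pi*T*(M+L)/(1+\<bar>lam - w\<bar>) + 2*pi*T*(M+L)/(1+\<bar>lam + w\<bar>)) / 2"
    using n1 n2 by simp
  also have "\<dots> = pi*T*(M+L)*(1/(1+\<bar>lam - w\<bar>) + 1/(1+\<bar>lam + w\<bar>))"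
  proof -
    have u: "2*pi*T*(M+L)/(1+\<bar>lam - w\<bar>) = 2*(pi*T*(M+L)*(1/(1+\<bar>lam - w\<bar>)))" by simp
    have v: "2*pi*T*(M+L)/(1+\<bar>lam + w\<bar>) = 2*(pi*T*(M+L)*(1/(1+\<bar>lam + w\<bar>)))" by simp
    show ?thesis unfolding u v by (simp only: distrib_left[symmetric]) simp
  qed
  finally show ?thesis using eq by simp
qed

lemma Q_bound:
  fixes g1 g2 :: "real \<Rightarrow> complex"
  assumes cd: "0 \<le> c" "c \<le> d" "d \<le> T" and c1: "continuous_on {c..d} g1" and c2: "continuous_on {c..d} g2"
    and E: "\<And>x. x\<in>{c..d} \<Longrightarrow> norm (g1 x - g2 x) \<le> E"
    and M: "\<And>x. x\<in>{c..d} \<Longrightarrow> norm (g2 x) \<le> M"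
    and tx: "\<And>x. x\<in>{c..d} \<Longrightarrow> \<bar>t - x\<bar> \<le> T"
    and W: "\<bar>w1 + w2\<bar> \<le> W"
  shows "norm (integral {c..d} (\<lambda>x. complex_of_real (sin ((t-x)*w1)) * cis (lam*x) * g1 x)
     + integral {c..d} (\<lambda>x. complex_of_real (sin ((t-x)*w2)) * cis (lam*x) * g2 x)) \<le> T*(E + T*W*M)"
proof -
  have E0: "0 \<le> E" using E[of c] cd by (auto intro: order_trans[OF norm_ge_zero])
  have M0: "0 \<le> M" using M[of c] cd by (auto intro: order_trans[OF norm_ge_zero])
  have W0: "0 \<le> W" using W by linarith
  have T0: "0 \<le> T" using cd by linarith
  have "integral {c..d} (\<lambda>x. complex_of_real (sin ((t-x)*w1)) * cis (lam*x) * g1 x)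
     + integral {c..d} (\<lambda>x. complex_of_real (sin ((t-x)*w2)) * cis (lam*x) * g2 x)
     = integral {c..d} (\<lambda>x. complex_of_real (sin ((t-x)*w1)) * cis (lam*x) * g1 x +
          complex_of_real (sin ((t-x)*w2)) * cis (lam*x) * g2 x)"
    by (rule integral_add[symmetric]; intro integrable_continuous_interval continuous_intros c1 c2)
  also have "norm \<dots> \<le> (E + T*W*M) * (d - c)"
  proof (rule integral_bound)
    show "c \<le> d" by (rule cd)
    show "continuous_on {c..d} (\<lambda>x. complex_of_real (sin ((t-x)*w1)) * cis (lam*x) * g1 x +
          complex_of_real (sin ((t-x)*w2)) * cis (lam*x) * g2 x)"
      by (intro continuous_intros c1 c2)
    fix x assume x: "x \<in> {c..d}"
    define s1 where "s1 = sin ((t-x)*w1)"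
    define s2 where "s2 = sin ((t-x)*w2)"
    have "complex_of_real s1 * cis (lam*x) * g1 x + complex_of_real s2 * cis (lam*x) * g2 x =
       cis (lam*x) * (complex_of_real s1 * (g1 x - g2 x) + complex_of_real (s1 + s2) * g2 x)"
      by (simp add: algebra_simps)
    then have "norm (complex_of_real s1 * cis (lam*x) * g1 x + complex_of_real s2 * cis (lam*x) * g2 x)
       = norm (complex_of_real s1 * (g1 x - g2 x) + complex_of_real (s1 + s2) * g2 x)"
      by (simp add: norm_mult)
    also have "\<dots> \<le> norm (complex_of_real s1 * (g1 x - g2 x)) + norm (complex_of_real (s1 + s2) * g2 x)"
      by (rule norm_triangle_ineq)
    also have "\<dots> = \<bar>s1\<bar> * norm (g1 x - g2 x) + \<bar>s1 + s2\<bar> * norm (g2 x)"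
      by (simp only: norm_mult norm_of_real)
    also have "\<dots> \<le> 1 * E + (T*W) * M"
    proof (intro add_mono mult_mono)
      show "\<bar>s1\<bar> \<le> 1" unfolding s1_def by simp
      show "norm (g1 x - g2 x) \<le> E" by (rule E[OF x])
      show "norm (g2 x) \<le> M" by (rule M[OF x])
      have "\<bar>s1 + s2\<bar> \<le> \<bar>(t-x)*w1 + (t-x)*w2\<bar>" unfolding s1_def s2_def by (rule sin_sum_le)
      also have "\<dots> = \<bar>t - x\<bar> * \<bar>w1 + w2\<bar>" by (simp add: abs_mult[symmetric] algebra_simps)
      also have "\<dots> \<le> T * W" using tx[OF x] W by (intro mult_mono) auto
      finally show "\<bar>s1 + s2\<bar> \<le> T * W" .
    qed (use E0 M0 T0 W0 in auto)
    finally show "norm (complex_of_real (sin ((t-x)*w1)) * cis (lam*x) * g1 x +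
          complex_of_real (sin ((t-x)*w2)) * cis (lam*x) * g2 x) \<le> E + T*W*M"
      unfolding s1_def s2_def by simp
  qed
  also have "\<dots> \<le> (E + T*W*M) * T" using cd E0 M0 T0 W0 by (intro mult_left_mono) auto
  also have "\<dots> = T*(E + T*W*M)" by (rule mult.commute)
  finally show ?thesis .
qed

lemma neg_t_zero:
  fixes r :: "real \<Rightarrow> real" and s :: "real \<Rightarrow> complex"
  assumes J: "J \<subseteq> {0..T}" and t: "t < 0"
  shows "interval_lebesgue_integral lborel (ereal 0) (ereal t) (\<lambda>x. complex_of_real (indicator J x * r x) * s x) = 0"
proof -
  define F where "F = (\<lambda>x. complex_of_real (indicator J x * r x) * s x)"
  have e: "(\<lambda>x. indicator (einterval (ereal t) (ereal 0)) x *\<^sub>R F x) = (\<lambda>x. 0)"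
    using J by (auto simp: indicator_def F_def fun_eq_iff)
  have "interval_lebesgue_integral lborel (ereal 0) (ereal t) F = - set_lebesgue_integral lborel (einterval (ereal t) (ereal 0)) F"
    using t unfolding interval_lebesgue_integral_def by simp
  also have "\<dots> = 0" unfolding set_lebesgue_integral_def e by simp
  finally show ?thesis unfolding F_def .
qed

lemma chi_neg: "chiLP \<rho> k (z3neg n) = chiLP \<rho> k n"
  by (simp add: chiLP_def rhoN_def)

lemma chi_abs:
  assumes "trunc_profile \<rho>" shows "\<bar>chiLP \<rho> k n\<bar> \<le> 1"
proof -
  have b: "0 \<le> \<rho> r \<and> \<rho> r \<le> 1" for r using assms unfolding trunc_profile_def by blast
  have d: "\<bar>\<rho> u - \<rho> v\<bar> \<le> 1" for u v using b[of u] b[of v] by (simp add: abs_le_iff)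
  have e: "\<bar>\<rho> u\<bar> \<le> 1" for u using b[of u] by simp
  show ?thesis unfolding chiLP_def rhoN_def using d e by simp
qed

lemma chi_supp:
  assumes tp: "trunc_profile \<rho>" and k: "1 \<le> k" and nz: "chiLP \<rho> k n \<noteq> 0"
  shows "2^k/2 < z3norm n" "z3norm n < 2 * 2^k"
proof -
  have one: "\<bar>r\<bar> \<le> 1 \<Longrightarrow> \<rho> r = 1" for r using tp unfolding trunc_profile_def by blast
  have zero: "\<bar>r\<bar> \<ge> 2 \<Longrightarrow> \<rho> r = 0" for r using tp unfolding trunc_profile_def by blast
  have nn: "0 \<le> z3norm n" by (rule z3norm_nonneg)
  obtain j where kj: "k = Suc j" using k by (cases k) auto
  define P where "P = (2::real)^j"
  have P0: "0 < P" unfolding P_def by simp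
  have pk: "(2::real)^k = 2 * P" unfolding P_def kj by simp
  have chi: "chiLP \<rho> k n = \<rho> (z3norm n / (2 * P)) - \<rho> (z3norm n / P)"
    using k by (simp add: chiLP_def rhoN_def pk kj P_def)
  show "2^k/2 < z3norm n"
  proof (rule ccontr)
    assume "\<not> ?thesis"
    then have le: "z3norm n \<le> P" using pk by simp
    have a1: "z3norm n / (2 * P) \<le> 1" using le P0 by (simp add: pos_divide_le_eq)
    have a2: "z3norm n / P \<le> 1" using le P0 by (simp add: pos_divide_le_eq)
    have "\<rho> (z3norm n / (2 * P)) = 1" using a1 nn P0 by (intro one) simp
    moreover have "\<rho> (z3norm n / P) = 1" using a2 nn P0 by (intro one) simp
    ultimately show False using nz chi by simp
  qed
  show "z3norm n < 2 * 2^k"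
  proof (rule ccontr)
    assume "\<not> ?thesis"
    then have ge: "4 * P \<le> z3norm n" using pk by simp
    have a1: "2 \<le> z3norm n / (2 * P)" using ge P0 by (simp add: pos_le_divide_eq)
    have a2: "2 \<le> z3norm n / P" using ge P0 by (simp add: pos_le_divide_eq)
    have "\<rho> (z3norm n / (2 * P)) = 0" using a1 by (intro zero) (metis abs_ge_self order_trans)
    moreover have "\<rho> (z3norm n / P) = 0" using a2 by (intro zero) (metis abs_ge_self order_trans)
    ultimately show False using nz chi by simp
  qed
qed

lemma jbr_powr3: "jbr n powr (-3) = 1 / jbr n ^ 3"
proof -
  have "0 < jbr n" using jbr_ge1[of n] by linarith
  then show ?thesis by (simp add: powr_minus_divide)
qed

lemma jbr_powr4: "jbr n powr (-4) = 1 / jbr n ^ 4"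
proof -
  have "0 < jbr n" using jbr_ge1[of n] by linarith
  then show ?thesis by (simp add: powr_minus_divide)
qed



lemma neg_t_zero2:
  fixes F :: "real \<Rightarrow> complex"
  assumes F: "\<And>x. x < 0 \<Longrightarrow> F x = 0" and t: "t < 0"
  shows "interval_lebesgue_integral lborel (ereal 0) (ereal t) F = 0"
proof -
  have e: "(\<lambda>x. indicator (einterval (ereal t) (ereal 0)) x *\<^sub>R F x) = (\<lambda>x. 0)"
    using F by (auto simp: indicator_def fun_eq_iff)
  have "interval_lebesgue_integral lborel (ereal 0) (ereal t) F = - set_lebesgue_integral lborel (einterval (ereal t) (ereal 0)) F"
    using t unfolding interval_lebesgue_integral_def by simp
  also have "\<dots> = 0" unfolding set_lebesgue_integral_def e by simp
  finally show ?thesis .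
qed

lemma sum_chi_bound:
  fixes chi :: "z3 \<Rightarrow> real" and X :: "z3 \<Rightarrow> complex"
  assumes fin: "finite S" and sub: "Sx \<subseteq> S" and chi1: "\<And>n. \<bar>chi n\<bar> \<le> 1"
    and supp: "\<And>n. n \<in> S \<Longrightarrow> chi n \<noteq> 0 \<Longrightarrow> n \<in> Sx"
  shows "norm (\<Sum>n\<in>S. complex_of_real (chi n) * X n) \<le> (\<Sum>n\<in>Sx. norm (X n))"
proof -
  have "norm (\<Sum>n\<in>S. complex_of_real (chi n) * X n) \<le> (\<Sum>n\<in>S. norm (complex_of_real (chi n) * X n))"
    by (rule norm_sum)
  also have "\<dots> = (\<Sum>n\<in>Sx. norm (complex_of_real (chi n) * X n))"
    by (rule sum.mono_neutral_right[OF fin sub]) (use supp in auto)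
  also have "\<dots> \<le> (\<Sum>n\<in>Sx. norm (X n))"
  proof (rule sum_mono)
    fix n show "norm (complex_of_real (chi n) * X n) \<le> norm (X n)"
      using chi1[of n] by (simp add: norm_mult mult_left_le_one_le)
  qed
  finally show ?thesis .
qed

lemma sum_split:
  fixes chi :: "z3 \<Rightarrow> real" and P Q :: "z3 \<Rightarrow> complex"
  assumes fin: "finite S" and Sneg: "\<And>n. n \<in> S \<Longrightarrow> z3neg n \<in> S" and chis: "\<And>n. chi (z3neg n) = chi n"
    and sub: "Sx \<subseteq> S" and chi1: "\<And>n. \<bar>chi n\<bar> \<le> 1"
    and supp: "\<And>n. n \<in> S \<Longrightarrow> chi n \<noteq> 0 \<Longrightarrow> n \<in> Sx"
  shows "norm (\<Sum>n\<in>S. complex_of_real (chi n) * ((P n + Q n) / 2))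
     \<le> (\<Sum>n\<in>Sx. norm (P n)) / 2 + (\<Sum>n\<in>Sx. norm (Q n + Q (z3neg n))) / 4"
proof -
  have negS: "z3neg ` S = S"
  proof
    show "z3neg ` S \<subseteq> S" using Sneg by auto
    show "S \<subseteq> z3neg ` S" using Sneg by (metis image_eqI subsetI z3neg_neg)
  qed
  have inj: "inj_on z3neg S" by (metis inj_onI z3neg_neg)
  have r: "(\<Sum>n\<in>S. complex_of_real (chi n) * Q n) = (\<Sum>n\<in>S. complex_of_real (chi n) * Q (z3neg n))"
  proof -
    have "(\<Sum>n\<in>S. complex_of_real (chi n) * Q n) = (\<Sum>n\<in>z3neg ` S. complex_of_real (chi n) * Q n)"
      by (simp only: negS)
    also have "\<dots> = (\<Sum>n\<in>S. complex_of_real (chi (z3neg n)) * Q (z3neg n))"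
      by (simp add: sum.reindex[OF inj])
    finally show ?thesis by (simp add: chis)
  qed
  have "(\<Sum>n\<in>S. complex_of_real (chi n) * ((P n + Q n) / 2)) =
     (\<Sum>n\<in>S. complex_of_real (chi n) * P n) / 2 + (\<Sum>n\<in>S. complex_of_real (chi n) * Q n) / 2"
  proof -
    have "(\<lambda>n. complex_of_real (chi n) * ((P n + Q n) / 2)) =
       (\<lambda>n. complex_of_real (chi n) * P n / 2 + complex_of_real (chi n) * Q n / 2)"
      by (auto simp: fun_eq_iff field_simps)
    then show ?thesis by (simp only: sum.distrib sum_divide_distrib)
  qed
  also have "(\<Sum>n\<in>S. complex_of_real (chi n) * Q n) =
     (\<Sum>n\<in>S. complex_of_real (chi n) * (Q n + Q (z3neg n))) / 2"
  proof -
    have "(\<Sum>n\<in>S. complex_of_real (chi n) * (Q n + Q (z3neg n))) =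
       (\<Sum>n\<in>S. complex_of_real (chi n) * Q n) + (\<Sum>n\<in>S. complex_of_real (chi n) * Q (z3neg n))"
      by (simp add: distrib_left sum.distrib)
    then show ?thesis using r by simp
  qed
  finally have eq: "(\<Sum>n\<in>S. complex_of_real (chi n) * ((P n + Q n) / 2)) =
     (\<Sum>n\<in>S. complex_of_real (chi n) * P n) / 2 + (\<Sum>n\<in>S. complex_of_real (chi n) * (Q n + Q (z3neg n))) / 4"
    by simp
  have b1: "norm (\<Sum>n\<in>S. complex_of_real (chi n) * P n) \<le> (\<Sum>n\<in>Sx. norm (P n))"
    by (rule sum_chi_bound[OF fin sub chi1 supp])
  have b2: "norm (\<Sum>n\<in>S. complex_of_real (chi n) * (Q n + Q (z3neg n))) \<le> (\<Sum>n\<in>Sx. norm (Q n + Q (z3neg n)))"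
    by (rule sum_chi_bound[OF fin sub chi1 supp])
  show ?thesis unfolding eq
    using norm_triangle_ineq[of "(\<Sum>n\<in>S. complex_of_real (chi n) * P n) / 2" "(\<Sum>n\<in>S. complex_of_real (chi n) * (Q n + Q (z3neg n))) / 4"]
      b1 b2 by (simp add: norm_divide)
qed

lemma e_le_3: "exp (1::real) \<le> 3"
proof -
  have h: "\<bar>exp 1 - 5837465777 / 2147483648\<bar> \<le> (inverse (2 ^ 32)::real)" by (rule e_approx_32)
  have h2: "exp 1 - 5837465777 / 2147483648 \<le> (inverse (2 ^ 32)::real)" using h abs_le_iff by blast
  have "5837465777 / 2147483648 + inverse (2 ^ 32) \<le> (3::real)" by simp
  then show ?thesis using h2 by linarith
qed

lemma ln_facts:
  fixes N :: real assumes N: "8 \<le> N"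
  shows "1 \<le> ln (2 + N)" "1 + ln (2*N + 1) \<le> 3 * ln (2 + N)"
proof -
  have "ln (exp 1) \<le> ln (2 + N)" using e_le_3 N by (subst ln_le_cancel_iff) auto
  then show l1: "1 \<le> ln (2 + N)" by simp
  have "ln (2*N + 1) \<le> ln (2 * (2 + N))" using N by (subst ln_le_cancel_iff) auto
  also have "\<dots> = ln 2 + ln (2 + N)" by (rule ln_mult_pos) (use N in auto)
  also have "ln (2::real) \<le> 1" using ln_le_minus_one[of 2] by simp
  finally show "1 + ln (2*N + 1) \<le> 3 * ln (2 + N)" using l1 by linarith
qed



definition Hyp :: "(real \<Rightarrow> real \<Rightarrow> z3 \<Rightarrow> complex) \<Rightarrow> real \<Rightarrow> real \<Rightarrow> bool" where
  "Hyp f T A \<longleftrightarrow> (\<forall>t t' n. \<bar>t\<bar> \<le> T \<longrightarrow> \<bar>t'\<bar> \<le> T \<longrightarrow>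
        norm (f t t' n) \<le> A * jbr n powr (-3) \<and>
        norm (f t t' n - f t t' (z3neg n)) \<le> A * jbr n powr (-4) \<and>
        (\<exists>D. ((\<lambda>s. f t s n) has_vector_derivative D) (at t' within {-T..T}) \<and>
             norm D \<le> A * jbr n powr (-4)))"

lemma hyp_facts:
  assumes H: "Hyp f T A" and t: "\<bar>t\<bar> \<le> T"
  shows "continuous_on {-T..T} (\<lambda>x. f t x n)"
    "\<And>x y. x \<in> {-T..T} \<Longrightarrow> y \<in> {-T..T} \<Longrightarrow> norm (f t x n - f t y n) \<le> A * jbr n powr (-4) * \<bar>x - y\<bar>"
    "\<And>x. x \<in> {-T..T} \<Longrightarrow> norm (f t x n) \<le> A * jbr n powr (-3)"
    "\<And>x. x \<in> {-T..T} \<Longrightarrow> norm (f t x n - f t x (z3neg n)) \<le> A * jbr n powr (-4)"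
proof -
  have hh: "\<And>t t' n. \<bar>t\<bar> \<le> T \<Longrightarrow> \<bar>t'\<bar> \<le> T \<Longrightarrow>
        norm (f t t' n) \<le> A * jbr n powr (-3) \<and>
        norm (f t t' n - f t t' (z3neg n)) \<le> A * jbr n powr (-4) \<and>
        (\<exists>D. ((\<lambda>s. f t s n) has_vector_derivative D) (at t' within {-T..T}) \<and>
             norm D \<le> A * jbr n powr (-4))"
    using H unfolding Hyp_def by blast
  have iv: "\<And>s. s \<in> {-T..T} \<Longrightarrow> \<bar>s\<bar> \<le> T" by auto
  have D: "\<And>s. s \<in> {-T..T} \<Longrightarrow> \<exists>D. ((\<lambda>x. f t x n) has_vector_derivative D) (at s within {-T..T}) \<and> norm D \<le> A * jbr n powr (-4)"
    using hh[OF t iv] by blast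
  show "continuous_on {-T..T} (\<lambda>x. f t x n)" by (rule lip_deriv(1)[OF D])
  show "\<And>x y. x \<in> {-T..T} \<Longrightarrow> y \<in> {-T..T} \<Longrightarrow> norm (f t x n - f t y n) \<le> A * jbr n powr (-4) * \<bar>x - y\<bar>"
    by (rule lip_deriv(2)[OF D])
  show "\<And>x. x \<in> {-T..T} \<Longrightarrow> norm (f t x n) \<le> A * jbr n powr (-3)"
    using hh[OF t iv] by blast
  show "\<And>x. x \<in> {-T..T} \<Longrightarrow> norm (f t x n - f t x (z3neg n)) \<le> A * jbr n powr (-4)"
    using hh[OF t iv] by blast
qed

lemma int_decomp:
  fixes g :: "real \<Rightarrow> complex"
  assumes cd: "c \<le> d" and cont: "continuous_on {c..d} g"
  shows "integral {c..d} (\<lambda>x. complex_of_real (sin ((t-x)*al) * cos ((t-x)*be)) * cis (lam*x) * g x) =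
    (integral {c..d} (\<lambda>x. complex_of_real (sin ((t-x)*(al+be))) * cis (lam*x) * g x) +
     integral {c..d} (\<lambda>x. complex_of_real (sin ((t-x)*(al-be))) * cis (lam*x) * g x)) / 2"
proof -
  let ?F1 = "\<lambda>x. complex_of_real (sin ((t-x)*(al+be))) * cis (lam*x) * g x"
  let ?F2 = "\<lambda>x. complex_of_real (sin ((t-x)*(al-be))) * cis (lam*x) * g x"
  have h1: "(?F1 has_integral integral {c..d} ?F1) {c..d}"
    by (intro integrable_integral integrable_continuous_interval continuous_intros cont)
  have h2: "(?F2 has_integral integral {c..d} ?F2) {c..d}"
    by (intro integrable_integral integrable_continuous_interval continuous_intros cont)
  have h: "((\<lambda>x. (?F1 x + ?F2 x) / 2) has_integral (integral {c..d} ?F1 + integral {c..d} ?F2) / 2) {c..d}"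
    by (intro has_integral_divide has_integral_add h1 h2)
  have fe: "(\<lambda>x. (?F1 x + ?F2 x) / 2) = (\<lambda>x. complex_of_real (sin ((t-x)*al) * cos ((t-x)*be)) * cis (lam*x) * g x)"
  proof
    fix x
    have s: "sin ((t-x)*al) * cos ((t-x)*be) = (sin ((t-x)*(al+be)) + sin ((t-x)*(al-be))) / 2"
      unfolding sin_times_cos by (simp add: algebra_simps)
    show "(?F1 x + ?F2 x) / 2 = complex_of_real (sin ((t-x)*al) * cos ((t-x)*be)) * cis (lam*x) * g x"
      unfolding s by (simp add: field_simps)
  qed
  show ?thesis using h unfolding fe by (rule integral_unique)
qed



lemma inv_pow_bound:
  fixes j N :: real and m :: nat
  assumes "N/2 < j" "0 < N"
  shows "1 / j^m \<le> 2^m / N^m"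
proof -
  have "(N/2)^m \<le> j^m" using assms by (intro power_mono) auto
  then have "1 / j^m \<le> 1 / (N/2)^m" using assms by (intro frac_le) auto
  also have "\<dots> = 2^m / N^m" by (simp add: power_divide)
  finally show ?thesis .
qed

lemma P_term:
  assumes H: "Hyp f T A" and t: "0 \<le> t" "t \<le> T" and T1: "1 \<le> T"
    and cd: "0 \<le> c" "c \<le> d" "d \<le> t" and A1: "1 \<le> A" and n: "N/2 < z3norm n" and N: "0 < N"
  shows "norm (integral {c..d} (\<lambda>x. complex_of_real (sin ((t-x)*(jbr (z3add a n) + jbr n))) * cis (lam*x) * f t x n))
     \<le> 16*pi*T*A/N^3 * (GG lam a n + GG (-lam) a n)"
proof -
  have ht: "\<bar>t\<bar> \<le> T" using t by simp
  note hf = hyp_facts[OF H ht, where n=n]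
  have sub: "{c..d} \<subseteq> {-T..T}" using cd t by auto
  define M where "M = A * jbr n powr (-3)"
  define L where "L = A * jbr n powr (-4)"
  have L0: "0 \<le> L" unfolding L_def using A1 by simp
  have "norm (integral {c..d} (\<lambda>x. complex_of_real (sin ((t-x)*(jbr (z3add a n) + jbr n))) * cis (lam*x) * f t x n))
     \<le> pi*T*(M+L)*(1/(1+\<bar>lam - (jbr (z3add a n) + jbr n)\<bar>) + 1/(1+\<bar>lam + (jbr (z3add a n) + jbr n)\<bar>))"
  proof (rule P_bound)
    show "0 \<le> c" "c \<le> d" "d \<le> T" "1 \<le> T" using cd t T1 by auto
    show "continuous_on {c..d} (\<lambda>x. f t x n)" by (rule continuous_on_subset[OF hf(1) sub])
    show "\<And>x. x \<in> {c..d} \<Longrightarrow> norm (f t x n) \<le> M" unfolding M_def using hf(3) sub by blast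
    show "\<And>x y. x \<in> {c..d} \<Longrightarrow> y \<in> {c..d} \<Longrightarrow> norm (f t x n - f t y n) \<le> L * \<bar>x - y\<bar>"
      unfolding L_def using hf(2) sub by blast
    show "0 \<le> L" by (rule L0)
  qed
  also have "1/(1+\<bar>lam - (jbr (z3add a n) + jbr n)\<bar>) + 1/(1+\<bar>lam + (jbr (z3add a n) + jbr n)\<bar>)
      = GG lam a n + GG (-lam) a n"
  proof -
    have "\<bar>- lam - (jbr (z3add a n) + jbr n)\<bar> = \<bar>lam + (jbr (z3add a n) + jbr n)\<bar>" by linarith
    then show ?thesis by (simp add: GG_def om_def)
  qed
  also have "pi*T*(M+L)*(GG lam a n + GG (-lam) a n) \<le> pi*T*(16*A/N^3)*(GG lam a n + GG (-lam) a n)"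
  proof -
    have j: "N/2 < jbr n" using n jbr_ge_norm[of n] by linarith
    have j1: "1 \<le> jbr n" by (rule jbr_ge1)
    have b3: "1 / jbr n ^ 3 \<le> 2^3 / N^3" by (rule inv_pow_bound[OF j N])
    have b43: "1 / jbr n ^ 4 \<le> 1 / jbr n ^ 3"
      using j1 by (intro frac_le) (auto intro: power_increasing)
    have "M + L = A * (1 / jbr n ^ 3 + 1 / jbr n ^ 4)" unfolding M_def L_def jbr_powr3 jbr_powr4 by (simp add: algebra_simps)
    also have "\<dots> \<le> A * (2^3/N^3 + 2^3/N^3)" using b3 b43 A1 by (intro mult_left_mono) auto
    also have "\<dots> = 16*A/N^3" by simp
    finally have MLb: "M + L \<le> 16*A/N^3" .
    have "0 \<le> GG lam a n + GG (-lam) a n" using GG_nonneg by (simp add: add_nonneg_nonneg)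
    moreover have "0 \<le> pi * T" using T1 by simp
    ultimately show ?thesis using MLb by (intro mult_right_mono mult_left_mono) auto
  qed
  finally show ?thesis by (simp add: mult_ac)
qed

lemma Q_term:
  assumes H: "Hyp f T A" and t: "0 \<le> t" "t \<le> T" and T1: "1 \<le> T"
    and cd: "0 \<le> c" "c \<le> d" "d \<le> t" and A1: "1 \<le> A" and n: "N/2 < z3norm n" and N: "0 < N"
    and a: "z3norm a \<le> C * A" and C0: "0 \<le> C"
  shows "norm (integral {c..d} (\<lambda>x. complex_of_real (sin ((t-x)*(jbr (z3add a n) - jbr n))) * cis (lam*x) * f t x n)
     + integral {c..d} (\<lambda>x. complex_of_real (sin ((t-x)*(jbr (z3add a (z3neg n)) - jbr (z3neg n)))) * cis (lam*x) * f t x (z3neg n)))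
     \<le> 16*(1+C^2)*T^2*A^3/N^4"
proof -
  have ht: "\<bar>t\<bar> \<le> T" using t by simp
  note hf = hyp_facts[OF H ht, where n=n]
  note hfn = hyp_facts[OF H ht, where n="z3neg n"]
  have sub: "{c..d} \<subseteq> {-T..T}" using cd t by auto
  define j where "j = jbr n"
  have j: "N/2 < j" unfolding j_def using n jbr_ge_norm[of n] by linarith
  have j1: "1 \<le> j" unfolding j_def by (rule jbr_ge1)
  define W where "W = (C*A)^2 / j"
  have p3: "jbr n powr (-3) = 1 / j^3" unfolding j_def by (rule jbr_powr3)
  have p4: "jbr n powr (-4) = 1 / j^4" unfolding j_def by (rule jbr_powr4)
  have "norm (integral {c..d} (\<lambda>x. complex_of_real (sin ((t-x)*(jbr (z3add a n) - jbr n))) * cis (lam*x) * f t x n)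
     + integral {c..d} (\<lambda>x. complex_of_real (sin ((t-x)*(jbr (z3add a (z3neg n)) - jbr (z3neg n)))) * cis (lam*x) * f t x (z3neg n)))
     \<le> T*(A * jbr n powr (-4) + T*W*(A * jbr n powr (-3)))"
  proof (rule Q_bound)
    show "0 \<le> c" "c \<le> d" "d \<le> T" using cd t by auto
    show "continuous_on {c..d} (\<lambda>x. f t x n)" by (rule continuous_on_subset[OF hf(1) sub])
    show "continuous_on {c..d} (\<lambda>x. f t x (z3neg n))" by (rule continuous_on_subset[OF hfn(1) sub])
    show "\<And>x. x \<in> {c..d} \<Longrightarrow> norm (f t x n - f t x (z3neg n)) \<le> A * jbr n powr (-4)"
      using hf(4) sub by blast
    show "\<And>x. x \<in> {c..d} \<Longrightarrow> norm (f t x (z3neg n)) \<le> A * jbr n powr (-3)"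
      using hfn(3) sub by auto
    show "\<And>x. x \<in> {c..d} \<Longrightarrow> \<bar>t - x\<bar> \<le> T" using cd t by auto
    have sd: "0 \<le> jbr (z3add a n) + jbr (z3add a (z3neg n)) - 2 * jbr n"
      "jbr (z3add a n) + jbr (z3add a (z3neg n)) - 2 * jbr n \<le> z3norm a ^ 2 / jbr n"
      by (rule jbr_second_diff)+
    have "z3norm a ^ 2 \<le> (C*A)^2" using a z3norm_nonneg[of a] by (intro power_mono) auto
    then have "z3norm a ^ 2 / jbr n \<le> (C*A)^2 / jbr n" using j1 unfolding j_def by (intro divide_right_mono) auto
    then show "\<bar>(jbr (z3add a n) - jbr n) + (jbr (z3add a (z3neg n)) - jbr (z3neg n))\<bar> \<le> W"
      using sd unfolding W_def j_def by simp
  qed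
  also have "\<dots> = (T*A + T^2*C^2*A^3) * (1 / j^4)"
    using j1 unfolding W_def p3 p4
    by (simp add: field_simps power2_eq_square power3_eq_cube power4_eq_xxxx)
  also have "\<dots> \<le> ((1+C^2)*T^2*A^3) * (16 / N^4)"
  proof (rule mult_mono)
    have "T*A \<le> T^2*A^3"
    proof -
      have "T \<le> T^2" using T1 by (simp add: power2_eq_square)
      moreover have "A \<le> A^3" using A1 by (simp add: power3_eq_cube) (metis mult_le_cancel_left1 one_le_mult_iff order.trans less_le_trans zero_less_one mult_left_mono le_square less_le)
      ultimately show ?thesis using T1 A1 by (intro mult_mono) auto
    qed
    then show "T*A + T^2*C^2*A^3 \<le> (1+C^2)*T^2*A^3" by (simp add: algebra_simps)
    show "1 / j^4 \<le> 16 / N^4" using inv_pow_bound[OF j N, of 4] by simp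
    show "0 \<le> (1+C^2)*T^2*A^3" using A1 by simp
    show "0 \<le> 1 / j^4" using j1 by simp
  qed
  also have "\<dots> = 16*(1+C^2)*T^2*A^3/N^4" by simp
  finally show ?thesis .
qed



lemma main_bound:
  fixes f :: "real \<Rightarrow> real \<Rightarrow> z3 \<Rightarrow> complex" and a :: z3 and lam t T C A :: real and k :: nat
  assumes tp: "trunc_profile \<rho>" and C0: "0 < C" and T1: "1 \<le> T" and J: "is_interval J" and JT: "J \<subseteq> {0..T}"
    and A1: "1 \<le> A" and aC: "z3norm a \<le> C * A" and kN: "max 8 (4*C) * A \<le> (2::real)^k"
    and H: "Hyp f T A" and t: "\<bar>t\<bar> \<le> T"
  shows "norm (\<Sum>\<^sub>\<infinity> n. complex_of_real (chiLP \<rho> k n) *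
           interval_lebesgue_integral lborel (ereal 0) (ereal t)
             (\<lambda>t'. complex_of_real (indicator J t' *
                      sin ((t - t') * jbr (z3add a n)) * cos ((t - t') * jbr n)) *
                   cis (lam * t') * f t t' n))
        \<le> (240000 + 500*(1+C^2)) * T ^ 2 * A ^ 3 * ln (2 + 2 ^ k) / 2 ^ k"
proof -
  define N where "N = (2::real)^k"
  have Npos: "0 < N" unfolding N_def by simp
  have "8 * 1 \<le> max 8 (4*C) * A" using A1 by (intro mult_mono) auto
  then have N8: "8 \<le> N" using kN unfolding N_def by simp
  have "4 * (C * A) \<le> max 8 (4*C) * A" using A1 C0 by (simp add: mult.assoc[symmetric] mult_right_mono)
  then have aN: "z3norm a \<le> N/4" using kN aC unfolding N_def by simp
  have k1: "1 \<le> k"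
  proof (rule ccontr)
    assume "\<not> 1 \<le> k" then have "k = 0" by simp
    then show False using N8 unfolding N_def by simp
  qed
  note lnf = ln_facts[OF N8]
  define X where "X = T^2 * A^3 * ln (2 + N) / N"
  have TA: "T * A \<le> T^2 * A^3"
  proof -
    have "T \<le> T^2" using T1 by (simp add: power2_eq_square)
    moreover have "A \<le> A^3"
    proof -
      have "1 * 1 \<le> A * A" using A1 by (intro mult_mono) auto
      then have "A * 1 \<le> A * (A * A)" using A1 by (intro mult_left_mono) auto
      then show ?thesis by (simp add: power3_eq_cube)
    qed
    ultimately show ?thesis using T1 A1 by (intro mult_mono) auto
  qed
  have X0: "0 \<le> X" unfolding X_def using lnf(1) Npos T1 A1 by simp
  define Ig where "Ig n = interval_lebesgue_integral lborel (ereal 0) (ereal t)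
             (\<lambda>t'. complex_of_real (indicator J t' *
                      sin ((t - t') * jbr (z3add a n)) * cos ((t - t') * jbr n)) *
                   cis (lam * t') * f t t' n)" for n
  have goal_eq: "(240000 + 500*(1+C^2)) * T ^ 2 * A ^ 3 * ln (2 + 2 ^ k) / 2 ^ k = (240000 + 500*(1+C^2)) * X"
    unfolding X_def N_def by simp
  show ?thesis
    unfolding Ig_def[symmetric] goal_eq
  proof (cases "t < 0")
    case True
    have "Ig n = 0" for n unfolding Ig_def
      by (rule neg_t_zero2[OF _ True]) (use JT in \<open>auto simp: indicator_def\<close>)
    then show "norm (\<Sum>\<^sub>\<infinity> n. complex_of_real (chiLP \<rho> k n) * Ig n) \<le> (240000 + 500*(1+C^2)) * X"
      using X0 by simp
  next
    case False
    then have t0: "0 \<le> t" by simp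
    have tT: "t \<le> T" using t by simp
    obtain c d where cd: "0 \<le> c" "c \<le> d" "d \<le> t" and conv: "\<And>\<psi>::real\<Rightarrow>complex. continuous_on {0..t} \<psi> \<Longrightarrow>
     (LBINT x=ereal 0..ereal t. complex_of_real (indicator J x) * \<psi> x) = integral {c..d} \<psi>"
      using lbint_conv[OF J t0] by blast
    define Pn where "Pn n = integral {c..d} (\<lambda>x. complex_of_real (sin ((t-x)*(jbr (z3add a n) + jbr n))) * cis (lam*x) * f t x n)" for n
    define Qn where "Qn n = integral {c..d} (\<lambda>x. complex_of_real (sin ((t-x)*(jbr (z3add a n) - jbr n))) * cis (lam*x) * f t x n)" for n
    have Ig_eq: "Ig n = (Pn n + Qn n) / 2" for n
    proof -
      have ht: "\<bar>t\<bar> \<le> T" by (rule t)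
      note hf = hyp_facts[OF H ht, where n=n]
      have c0t: "continuous_on {0..t} (\<lambda>x. f t x n)" by (rule continuous_on_subset[OF hf(1)]) (use tT in auto)
      have fe: "(\<lambda>t'. complex_of_real (indicator J t' *
                      sin ((t - t') * jbr (z3add a n)) * cos ((t - t') * jbr n)) *
                   cis (lam * t') * f t t' n) =
          (\<lambda>x. complex_of_real (indicator J x) * (complex_of_real (sin ((t-x)*jbr (z3add a n)) * cos ((t-x)*jbr n)) * cis (lam*x) * f t x n))"
        by (rule ext) (simp add: mult.assoc)
      have "Ig n = integral {c..d} (\<lambda>x. complex_of_real (sin ((t-x)*jbr (z3add a n)) * cos ((t-x)*jbr n)) * cis (lam*x) * f t x n)"
        unfolding Ig_def fe by (rule conv) (intro continuous_intros c0t)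
      also have "\<dots> = (Pn n + Qn n) / 2" unfolding Pn_def Qn_def
        by (rule int_decomp[OF cd(2)]) (rule continuous_on_subset[OF c0t], use cd in auto)
      finally show ?thesis .
    qed
    define M0 :: int where "M0 = 2 * 2^k"
    have M0r: "real_of_int M0 = 2 * N" unfolding M0_def N_def by simp
    have M00: "0 \<le> M0" unfolding M0_def by simp
    have supp: "chiLP \<rho> k n \<noteq> 0 \<Longrightarrow> N/2 < z3norm n \<and> z3norm n < 2 * N" for n
      using chi_supp[OF tp k1] unfolding N_def by blast
    have "(\<Sum>\<^sub>\<infinity> n. complex_of_real (chiLP \<rho> k n) * Ig n) = infsum (\<lambda>n. complex_of_real (chiLP \<rho> k n) * Ig n) (box M0)"
    proof (rule infsum_cong_neutral)
      fix n assume "n \<in> UNIV - box M0"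
      then have "2 * N < z3norm n" using notin_box[of n M0] M0r by auto
      then have "chiLP \<rho> k n = 0" using supp[of n] by auto
      then show "complex_of_real (chiLP \<rho> k n) * Ig n = 0" by simp
    qed auto
    also have "\<dots> = (\<Sum>n\<in>box M0. complex_of_real (chiLP \<rho> k n) * ((Pn n + Qn n) / 2))"
      by (simp add: Ig_eq)
    finally have sum_eq: "(\<Sum>\<^sub>\<infinity> n. complex_of_real (chiLP \<rho> k n) * Ig n) =
       (\<Sum>n\<in>box M0. complex_of_real (chiLP \<rho> k n) * ((Pn n + Qn n) / 2))" .
    have split: "norm (\<Sum>n\<in>box M0. complex_of_real (chiLP \<rho> k n) * ((Pn n + Qn n) / 2))
     \<le> (\<Sum>n\<in>Sp M0 N. norm (Pn n)) / 2 + (\<Sum>n\<in>Sp M0 N. norm (Qn n + Qn (z3neg n))) / 4"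
    proof (rule sum_split)
      show "finite (box M0)" by simp
      show "\<And>n. n \<in> box M0 \<Longrightarrow> z3neg n \<in> box M0" by (simp add: box_neg)
      show "\<And>n. chiLP \<rho> k (z3neg n) = chiLP \<rho> k n" by (rule chi_neg)
      show "Sp M0 N \<subseteq> box M0" by (auto simp: Sp_def)
      show "\<And>n. \<bar>chiLP \<rho> k n\<bar> \<le> 1" by (rule chi_abs[OF tp])
      show "\<And>n. n \<in> box M0 \<Longrightarrow> chiLP \<rho> k n \<noteq> 0 \<Longrightarrow> n \<in> Sp M0 N" using supp by (auto simp: Sp_def)
    qed
    define Bc where "Bc = 6 * (real_of_int (2*M0+1)^2 * (8 * (1 + ln (real_of_int M0 + 1))))"
    have Bc: "Bc \<le> 3600 * N^2 * ln (2 + N)"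
    proof -
      have e1: "real_of_int (2*M0+1) = 4*N+1" using M0r by simp
      have "(4*N+1)^2 \<le> (5*N)^2" using N8 by (intro power_mono) auto
      then have s1: "real_of_int (2*M0+1)^2 \<le> 25 * N^2" unfolding e1 by (simp add: power_mult_distrib)
      have l0: "0 \<le> ln (real_of_int M0 + 1)" using M00 by simp
      have s2: "1 + ln (real_of_int M0 + 1) \<le> 3 * ln (2 + N)" using lnf(2) M0r by simp
      have "Bc \<le> 6 * (25 * N^2 * (8 * (3 * ln (2 + N))))" unfolding Bc_def
        using s1 s2 lnf(1) l0 by (intro mult_left_mono mult_mono) auto
      then show ?thesis by simp
    qed
    have Psum: "(\<Sum>n\<in>Sp M0 N. norm (Pn n)) \<le> 115200 * pi * (T * A * ln (2 + N) / N)"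
    proof -
      have "(\<Sum>n\<in>Sp M0 N. norm (Pn n)) \<le> (\<Sum>n\<in>Sp M0 N. 16*pi*T*A/N^3 * (GG lam a n + GG (-lam) a n))"
      proof (rule sum_mono)
        fix n assume "n \<in> Sp M0 N"
        then have n: "N/2 < z3norm n" by (simp add: Sp_def)
        show "norm (Pn n) \<le> 16*pi*T*A/N^3 * (GG lam a n + GG (-lam) a n)"
          unfolding Pn_def by (rule P_term[OF H t0 tT T1 cd A1 n Npos])
      qed
      also have "\<dots> = 16*pi*T*A/N^3 * ((\<Sum>n\<in>Sp M0 N. GG lam a n) + (\<Sum>n\<in>Sp M0 N. GG (-lam) a n))"
        by (simp only: sum.distrib[symmetric] sum_distrib_left)
      also have "\<dots> \<le> 16*pi*T*A/N^3 * (Bc + Bc)"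
      proof (rule mult_left_mono)
        show "(\<Sum>n\<in>Sp M0 N. GG lam a n) + (\<Sum>n\<in>Sp M0 N. GG (-lam) a n) \<le> Bc + Bc"
          unfolding Bc_def by (intro add_mono Sp_sum M00 N8 aN)
        show "0 \<le> 16*pi*T*A/N^3" using T1 A1 Npos by simp
      qed
      also have "\<dots> \<le> 16*pi*T*A/N^3 * (2 * (3600 * N^2 * ln (2 + N)))"
        using Bc T1 A1 Npos by (intro mult_left_mono) auto
      also have "\<dots> = 115200 * pi * (T * A * ln (2 + N) / N)"
        using Npos by (simp add: field_simps power2_eq_square power3_eq_cube)
      finally show ?thesis .
    qed
    have Qsum: "(\<Sum>n\<in>Sp M0 N. norm (Qn n + Qn (z3neg n))) \<le> 2000 * (1+C^2) * (T^2 * A^3 / N)"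
    proof -
      have "(\<Sum>n\<in>Sp M0 N. norm (Qn n + Qn (z3neg n))) \<le> (\<Sum>n\<in>Sp M0 N. 16*(1+C^2)*T^2*A^3/N^4)"
      proof (rule sum_mono)
        fix n assume "n \<in> Sp M0 N"
        then have n: "N/2 < z3norm n" by (simp add: Sp_def)
        show "norm (Qn n + Qn (z3neg n)) \<le> 16*(1+C^2)*T^2*A^3/N^4"
          unfolding Qn_def by (rule Q_term[OF H t0 tT T1 cd A1 n Npos aC]) (use C0 in simp)
      qed
      also have "\<dots> = real (card (Sp M0 N)) * (16*(1+C^2)*T^2*A^3/N^4)" by simp
      also have "\<dots> \<le> (125 * N^3) * (16*(1+C^2)*T^2*A^3/N^4)"
      proof (rule mult_right_mono)
        have "card (Sp M0 N) \<le> card (box M0)" by (rule card_mono) (auto simp: Sp_def)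
        also have "\<dots> = nat (2*M0+1) ^ 3" by (rule card_box[OF M00])
        finally have "real (card (Sp M0 N)) \<le> real (nat (2*M0+1) ^ 3)" by (simp only: of_nat_le_iff)
        also have "\<dots> = (4*N+1)^3" using M0r M00 by simp
        also have "\<dots> \<le> (5*N)^3" using N8 by (intro power_mono) auto
        also have "\<dots> = 125 * N^3" by (simp add: power_mult_distrib)
        finally show "real (card (Sp M0 N)) \<le> 125 * N^3" .
        show "0 \<le> 16*(1+C^2)*T^2*A^3/N^4" using T1 A1 Npos by simp
      qed
      also have "\<dots> = 2000 * (1+C^2) * (T^2 * A^3 / N)"
        using Npos by (simp add: field_simps power2_eq_square power3_eq_cube power4_eq_xxxx)
      finally show ?thesis .
    qed
    have Y: "T * A * ln (2 + N) / N \<le> X"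
      unfolding X_def using TA lnf(1) Npos by (intro divide_right_mono mult_right_mono) auto
    have Z: "T^2 * A^3 / N \<le> X"
    proof -
      have "T^2 * A^3 * 1 \<le> T^2 * A^3 * ln (2 + N)" using lnf(1) T1 A1 by (intro mult_left_mono) auto
      then show ?thesis unfolding X_def using Npos by (intro divide_right_mono) auto
    qed
    have "norm (\<Sum>\<^sub>\<infinity> n. complex_of_real (chiLP \<rho> k n) * Ig n)
       \<le> (115200 * pi * (T * A * ln (2 + N) / N)) / 2 + (2000 * (1+C^2) * (T^2 * A^3 / N)) / 4"
    proof -
      have "(\<Sum>n\<in>Sp M0 N. norm (Pn n)) / 2 + (\<Sum>n\<in>Sp M0 N. norm (Qn n + Qn (z3neg n))) / 4
         \<le> (115200 * pi * (T * A * ln (2 + N) / N)) / 2 + (2000 * (1+C^2) * (T^2 * A^3 / N)) / 4"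
        using Psum Qsum by (intro add_mono divide_right_mono) auto
      then show ?thesis unfolding sum_eq using split by (rule order_trans[rotated])
    qed
    also have "\<dots> \<le> (115200 * 4 * X) / 2 + (2000 * (1+C^2) * X) / 4"
    proof -
      have Yn: "0 \<le> T * A * ln (2 + N) / N" using T1 A1 lnf(1) Npos by simp
      have p1: "115200 * pi * (T * A * ln (2 + N) / N) \<le> 115200 * 4 * X"
        using pi_less_4 Y Yn by (intro mult_mono) auto
      have p2: "2000 * (1+C^2) * (T^2 * A^3 / N) \<le> 2000 * (1+C^2) * X"
        using Z by (intro mult_left_mono) auto
      show ?thesis using p1 p2 by (intro add_mono divide_right_mono) auto
    qed
    also have "\<dots> \<le> (240000 + 500*(1+C^2)) * X" using X0 by (simp add: algebra_simps)
    finally show "norm (\<Sum>\<^sub>\<infinity> n. complex_of_real (chiLP \<rho> k n) * Ig n) \<le> (240000 + 500*(1+C^2)) * X" .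
  qed
qed

theorem lemma4p14:
  fixes \<rho> :: "real \<Rightarrow> real"
  assumes "trunc_profile \<rho>"
  shows "\<forall>C>0. \<exists>C'>0. \<exists>K>0. \<forall>(f :: real \<Rightarrow> real \<Rightarrow> z3 \<Rightarrow> complex) (a :: z3) (T :: real)
            (J :: real set) (A :: real) (k :: nat).
     1 \<le> T \<longrightarrow> is_interval J \<longrightarrow> J \<subseteq> {0..T} \<longrightarrow> 1 \<le> A \<longrightarrow>
     z3norm a \<le> C * A \<longrightarrow> (2::real) ^ k \<ge> C' * A \<longrightarrow>
     (\<forall>t t' n. \<bar>t\<bar> \<le> T \<longrightarrow> \<bar>t'\<bar> \<le> T \<longrightarrow>
        norm (f t t' n) \<le> A * jbr n powr (-3) \<and>
        norm (f t t' n - f t t' (z3neg n)) \<le> A * jbr n powr (-4) \<and>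
        (\<exists>D. ((\<lambda>s. f t s n) has_vector_derivative D) (at t' within {-T..T}) \<and>
             norm D \<le> A * jbr n powr (-4))) \<longrightarrow>
     (\<forall>(lam::real) t. \<bar>t\<bar> \<le> T \<longrightarrow>
        norm (\<Sum>\<^sub>\<infinity> n. complex_of_real (chiLP \<rho> k n) *
           interval_lebesgue_integral lborel (ereal 0) (ereal t)
             (\<lambda>t'. complex_of_real (indicator J t' *
                      sin ((t - t') * jbr (z3add a n)) * cos ((t - t') * jbr n)) *
                   cis (lam * t') * f t t' n))
        \<le> K * T ^ 2 * A ^ 3 * ln (2 + 2 ^ k) / 2 ^ k)"
proof (intro allI impI)
  fix C :: real assume C: "0 < C"
  show "\<exists>C'>0. \<exists>K>0. \<forall>(f :: real \<Rightarrow> real \<Rightarrow> z3 \<Rightarrow> complex) (a :: z3) (T :: real)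
            (J :: real set) (A :: real) (k :: nat).
     1 \<le> T \<longrightarrow> is_interval J \<longrightarrow> J \<subseteq> {0..T} \<longrightarrow> 1 \<le> A \<longrightarrow>
     z3norm a \<le> C * A \<longrightarrow> (2::real) ^ k \<ge> C' * A \<longrightarrow>
     (\<forall>t t' n. \<bar>t\<bar> \<le> T \<longrightarrow> \<bar>t'\<bar> \<le> T \<longrightarrow>
        norm (f t t' n) \<le> A * jbr n powr (-3) \<and>
        norm (f t t' n - f t t' (z3neg n)) \<le> A * jbr n powr (-4) \<and>
        (\<exists>D. ((\<lambda>s. f t s n) has_vector_derivative D) (at t' within {-T..T}) \<and>
             norm D \<le> A * jbr n powr (-4))) \<longrightarrow>
     (\<forall>(lam::real) t. \<bar>t\<bar> \<le> T \<longrightarrow>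
        norm (\<Sum>\<^sub>\<infinity> n. complex_of_real (chiLP \<rho> k n) *
           interval_lebesgue_integral lborel (ereal 0) (ereal t)
             (\<lambda>t'. complex_of_real (indicator J t' *
                      sin ((t - t') * jbr (z3add a n)) * cos ((t - t') * jbr n)) *
                   cis (lam * t') * f t t' n))
        \<le> K * T ^ 2 * A ^ 3 * ln (2 + 2 ^ k) / 2 ^ k)"
    apply (rule exI[of _ "max 8 (4*C)"])
    apply (rule conjI)
     apply simp
    apply (rule exI[of _ "240000 + 500*(1+C^2)"])
    apply (rule conjI)
     apply (simp add: add_pos_nonneg)
    apply (intro allI impI)
    apply (rule main_bound[OF assms C])
           apply assumption+
     apply (unfold Hyp_def)
     apply assumption
    apply assumption
    done
qed

end
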